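(* In the free-group setting described in the context, the extension $\pi_Y\circ\pi_f:X_f\to Y$ has a unique RIM.
   Context: Let $r\ge2$ and $\Gamma=F_r$ free on $S=\{a,b,a_3,\dots,a_r\}$. $Y$ is the Gromov boundary: infinite reduced words in $S\cup S^{-1}$, with $\Gamma$ acting by concatenation and cancellation. For nontrivial $s\in\Gamma$, $y\in Y$ starts with $s$ if $y=sy'$ with $y'\in Y$ and the last letter of the reduced word of $s$ not the inverse of the first letter of $y'$; $V_s$ is the set of such $y$; $a^\infty\in Y$ is the constant word $a$. Let $\{\Gamma_n\}$ be a strictly decreasing sequence of finite-index normal subgroups with trivial intersection, $Z=\varprojlim\Gamma/\Gamma_n$ (compact group containing $\Gamma$, with left translation action), $\pi_n:Z\to\Gamma/\Gamma_n$ the quotient maps, $X=Y\times Z$ with the product action, and $\pi_Y:X\to Y$ the projection. For $n\ge2$ choose $\gamma_n\in\Gamma_{n-1}\setminus\Gamma_n$, and set $u_n=a^nba^{-n}b^{-1}$, $D_n=V_{u_n}$, $C_n=\pi_n^{-1}(\gamma_n\Gamma_n)$, $X_+=\bigcup_{n\ge2}D_n\times C_n$, $X_-=X\setminus(X_+\cup\{(a^\infty,e_\Gamma)\})$, and $f:X\setminus\{(a^\infty,e_\Gamma)\}\to\{1,-1\}$, $f=1$ on $X_+$, $f=-1$ on $X_-$. Then $f$ is continuous and not continuously extendable, and $\Gamma\curvearrowright X_f$, $\pi_f:X_f\to X$ is the McMahon extension: the (unique up to conjugacy) minimal continuous action on a compact metrizable space with equivariant continuous surjection $\pi_f$ whose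 fibers are one point off the orbit $\Gamma(a^\infty,e_\Gamma)$ and two points on it, such that $f\circ\pi_f$ extends continuously from $X_f\setminus\pi_f^{-1}(a^\infty,e_\Gamma)$ to $X_f$. A RIM for an extension $\pi:\tilde X\to Y$ is a continuous $\Gamma$-equivariant map $y\mapsto\mu_y$ from $Y$ to the Borel probability measures on $\tilde X$ (weak$^*$ topology) with $\mathrm{supp}\,\mu_y\subseteq\pi^{-1}(y)$. *)

theory Defs
  imports "HOL-Analysis.Analysis" "HOL-Probability.Probability" "HOL-Algebra.Coset"
begin

text \<open>A letter (i, False) is the generator number i, (i, True) is its inverse.
  Generator 0 is a, generator 1 is b, generator i-1 is a_i for 3 \<le> i \<le> r.\<close>

type_synonym letter = "nat \<times> bool"
type_synonym word = "letter list"

definition linv :: "letter \<Rightarrow> letter" where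
  "linv l = (fst l, \<not> snd l)"

definition reduced :: "word \<Rightarrow> bool" where
  "reduced w \<longleftrightarrow> (\<forall>i. Suc i < length w \<longrightarrow> w ! Suc i \<noteq> linv (w ! i))"

definition FG_carrier :: "nat \<Rightarrow> word set" where
  "FG_carrier r = {w. reduced w \<and> (\<forall>l\<in>set w. fst l < r)}"

fun cons_red :: "letter \<Rightarrow> word \<Rightarrow> word" where
  "cons_red a [] = [a]"
| "cons_red a (c # w) = (if c = linv a then w else a # c # w)"

definition fg_mult :: "word \<Rightarrow> word \<Rightarrow> word" where
  "fg_mult v w = foldr cons_red v w"

definition FG :: "nat \<Rightarrow> word monoid" where
  "FG r = \<lparr>carrier = FG_carrier r, mult = fg_mult, one = []\<rparr>"

definition fg_inv :: "word \<Rightarrow> word" where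
  "fg_inv w = rev (map linv w)"

definition gen_a :: letter where "gen_a = (0, False)"
definition gen_b :: letter where "gen_b = (1, False)"

section \<open>The Gromov boundary Y: infinite reduced words\<close>

definition Yset :: "nat \<Rightarrow> (nat \<Rightarrow> letter) set" where
  "Yset r = {y. (\<forall>n. fst (y n) < r) \<and> (\<forall>n. y (Suc n) \<noteq> linv (y n))}"

text \<open>Topology of Y: the subspace topology of the product of discrete letter sets
  (the usual topology of the Gromov boundary of a free group).\<close>
definition topY :: "nat \<Rightarrow> (nat \<Rightarrow> letter) topology" where
  "topY r = subtopology (product_topology (\<lambda>_::nat. discrete_topology (UNIV :: letter set)) UNIV) (Yset r)"

definition cons_inf :: "letter \<Rightarrow> (nat \<Rightarrow> letter) \<Rightarrow> (nat \<Rightarrow> letter)" where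
  "cons_inf a y = (if y 0 = linv a then (\<lambda>n. y (Suc n)) else (\<lambda>n. if n = 0 then a else y (n - 1)))"

definition actY :: "word \<Rightarrow> (nat \<Rightarrow> letter) \<Rightarrow> (nat \<Rightarrow> letter)" where
  "actY w y = foldr cons_inf w y"

text \<open>V_s: the infinite reduced words starting with s.\<close>
definition Vset :: "nat \<Rightarrow> word \<Rightarrow> (nat \<Rightarrow> letter) set" where
  "Vset r s = {y \<in> Yset r. \<exists>y' \<in> Yset r. y = actY s y' \<and> last s \<noteq> linv (y' 0)}"

definition a_inf :: "nat \<Rightarrow> letter" where
  "a_inf = (\<lambda>_. gen_a)"

definition u_word :: "nat \<Rightarrow> word" where
  "u_word n = replicate n gen_a @ [gen_b] @ replicate n (linv gen_a) @ [linv gen_b]"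

text \<open>An element of Z is a compatible sequence of cosets z n \<in> Gamma/Gamma_n (n \<ge> 1);
  the unused coordinate 0 is fixed to be empty.\<close>
definition Zset :: "nat \<Rightarrow> (nat \<Rightarrow> word set) \<Rightarrow> (nat \<Rightarrow> word set) set" where
  "Zset r N = {z. z 0 = {} \<and> (\<forall>n\<ge>1. z n \<in> rcosets\<^bsub>FG r\<^esub> (N n) \<and> z (Suc n) \<subseteq> z n)}"

definition topZ :: "nat \<Rightarrow> (nat \<Rightarrow> word set) \<Rightarrow> (nat \<Rightarrow> word set) topology" where
  "topZ r N = subtopology (product_topology (\<lambda>_::nat. discrete_topology (UNIV :: word set set)) UNIV) (Zset r N)"

definition actZ :: "nat \<Rightarrow> word \<Rightarrow> (nat \<Rightarrow> word set) \<Rightarrow> (nat \<Rightarrow> word set)" where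
  "actZ r g z = (\<lambda>n. if n = 0 then {} else g <#\<^bsub>FG r\<^esub> z n)"

definition eZ :: "(nat \<Rightarrow> word set) \<Rightarrow> (nat \<Rightarrow> word set)" where
  "eZ N = (\<lambda>n. if n = 0 then {} else N n)"

definition Cset :: "nat \<Rightarrow> (nat \<Rightarrow> word set) \<Rightarrow> (nat \<Rightarrow> word) \<Rightarrow> nat \<Rightarrow> (nat \<Rightarrow> word set) set" where
  "Cset r N \<gamma> n = {z \<in> Zset r N. z n = \<gamma> n <#\<^bsub>FG r\<^esub> N n}"

type_synonym ptX = "(nat \<Rightarrow> letter) \<times> (nat \<Rightarrow> word set)"

definition Xset :: "nat \<Rightarrow> (nat \<Rightarrow> word set) \<Rightarrow> ptX set" where
  "Xset r N = Yset r \<times> Zset r N"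

definition topX :: "nat \<Rightarrow> (nat \<Rightarrow> word set) \<Rightarrow> ptX topology" where
  "topX r N = prod_topology (topY r) (topZ r N)"

definition actX :: "nat \<Rightarrow> word \<Rightarrow> ptX \<Rightarrow> ptX" where
  "actX r g p = (actY g (fst p), actZ r g (snd p))"

definition x0 :: "(nat \<Rightarrow> word set) \<Rightarrow> ptX" where
  "x0 N = (a_inf, eZ N)"

definition Xplus :: "nat \<Rightarrow> (nat \<Rightarrow> word set) \<Rightarrow> (nat \<Rightarrow> word) \<Rightarrow> ptX set" where
  "Xplus r N \<gamma> = (\<Union>n\<in>{2..}. Vset r (u_word n) \<times> Cset r N \<gamma> n)"

definition Xminus :: "nat \<Rightarrow> (nat \<Rightarrow> word set) \<Rightarrow> (nat \<Rightarrow> word) \<Rightarrow> ptX set" where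
  "Xminus r N \<gamma> = Xset r N - (Xplus r N \<gamma> \<union> {x0 N})"

text \<open>f : X - {x0} \<rightarrow> {1,-1}, (values outside X - {x0} are irrelevant)\<close>
definition fX :: "nat \<Rightarrow> (nat \<Rightarrow> word set) \<Rightarrow> (nat \<Rightarrow> word) \<Rightarrow> ptX \<Rightarrow> real" where
  "fX r N \<gamma> p = (if p \<in> Xplus r N \<gamma> then 1 else -1)"

definition admissible_seq :: "nat \<Rightarrow> (nat \<Rightarrow> word set) \<Rightarrow> bool" where
  "admissible_seq r N \<longleftrightarrow>
     (\<forall>n\<ge>1. N n \<lhd> FG r \<and> finite (rcosets\<^bsub>FG r\<^esub> (N n)) \<and> N (Suc n) \<subset> N n)
     \<and> (\<Inter>n\<in>{1..}. N n) = {[]}"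

definition admissible_gamma :: "nat \<Rightarrow> (nat \<Rightarrow> word set) \<Rightarrow> (nat \<Rightarrow> word) \<Rightarrow> bool" where
  "admissible_gamma r N \<gamma> \<longleftrightarrow> (\<forall>n\<ge>2. \<gamma> n \<in> N (n - 1) - N n)"

definition cont_action :: "nat \<Rightarrow> (word \<Rightarrow> 'x::topological_space \<Rightarrow> 'x) \<Rightarrow> bool" where
  "cont_action r \<phi> \<longleftrightarrow>
     (\<forall>x. \<phi> [] x = x) \<and>
     (\<forall>g\<in>FG_carrier r. \<forall>h\<in>FG_carrier r. \<forall>x. \<phi> (fg_mult g h) x = \<phi> g (\<phi> h x)) \<and>
     (\<forall>g\<in>FG_carrier r. continuous_on UNIV (\<phi> g))"

definition minimal_action :: "nat \<Rightarrow> (word \<Rightarrow> 'x::topological_space \<Rightarrow> 'x) \<Rightarrow> bool" where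
  "minimal_action r \<phi> \<longleftrightarrow>
     (\<forall>A. closed A \<and> A \<noteq> {} \<and> (\<forall>g\<in>FG_carrier r. \<phi> g ` A \<subseteq> A) \<longrightarrow> A = UNIV)"

text \<open>The McMahon extension pi_f : X_f \<rightarrow> X (characterising properties).\<close>
definition mcmahon_ext ::
  "nat \<Rightarrow> (nat \<Rightarrow> word set) \<Rightarrow> (nat \<Rightarrow> word) \<Rightarrow> (word \<Rightarrow> 'x::topological_space \<Rightarrow> 'x) \<Rightarrow> ('x \<Rightarrow> ptX) \<Rightarrow> bool" where
  "mcmahon_ext r N \<gamma> \<phi> \<pi> \<longleftrightarrow>
     compact (UNIV :: 'x set) \<and> metrizable_space (euclidean :: 'x topology) \<and>
     cont_action r \<phi> \<and> minimal_action r \<phi> \<and>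
     continuous_map euclidean (topX r N) \<pi> \<and> \<pi> ` UNIV = Xset r N \<and>
     (\<forall>g\<in>FG_carrier r. \<forall>x. \<pi> (\<phi> g x) = actX r g (\<pi> x)) \<and>
     (\<forall>p\<in>Xset r N. p \<notin> (\<lambda>g. actX r g (x0 N)) ` FG_carrier r
          \<longrightarrow> card (\<pi> -` {p}) = 1) \<and>
     (\<forall>p\<in>(\<lambda>g. actX r g (x0 N)) ` FG_carrier r. card (\<pi> -` {p}) = 2) \<and>
     (\<exists>F. continuous_on UNIV F \<and> (\<forall>x. \<pi> x \<noteq> x0 N \<longrightarrow> F x = fX r N \<gamma> (\<pi> x)))"

definition msupp :: "'x::topological_space measure \<Rightarrow> 'x set" where
  "msupp M = {x. \<forall>U. open U \<and> x \<in> U \<longrightarrow> emeasure M U > 0}"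

text \<open>Continuity into the weak* topology means continuity of y \<mapsto> \<integral> g d mu_y for
  every continuous real g (X_f compact).\<close>
definition is_RIM ::
  "nat \<Rightarrow> (word \<Rightarrow> 'x::topological_space \<Rightarrow> 'x) \<Rightarrow> ('x \<Rightarrow> nat \<Rightarrow> letter) \<Rightarrow> ((nat \<Rightarrow> letter) \<Rightarrow> 'x measure) \<Rightarrow> bool" where
  "is_RIM r \<phi> p \<mu> \<longleftrightarrow>
     (\<forall>y\<in>Yset r. sets (\<mu> y) = sets borel \<and> prob_space (\<mu> y)) \<and>
     (\<forall>g :: 'x \<Rightarrow> real. continuous_on UNIV g \<longrightarrow>
         continuous_map (topY r) euclideanreal (\<lambda>y. integral\<^sup>L (\<mu> y) g)) \<and>
     (\<forall>w\<in>FG_carrier r. \<forall>y\<in>Yset r. \<mu> (actY w y) = distr (\<mu> y) borel (\<phi> w)) \<and>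
     (\<forall>y\<in>Yset r. msupp (\<mu> y) \<subseteq> p -` {y})"

end

theory Submission
  imports Defs "HOL-Algebra.Multiplicative_Group"
begin

locale setting =
  fixes r :: nat and N :: "nat \<Rightarrow> word set" and \<gamma> :: "nat \<Rightarrow> word"
    and \<phi> :: "word \<Rightarrow> 'x::topological_space \<Rightarrow> 'x" and \<pi> :: "'x \<Rightarrow> ptX"
  assumes r2: "r \<ge> 2" and adm: "admissible_seq r N" and admg: "admissible_gamma r N \<gamma>"
    and mc: "mcmahon_ext r N \<gamma> \<phi> \<pi>"
begin

abbreviation "G \<equiv> FG r"
abbreviation "Ys \<equiv> Yset r"
abbreviation "Zs \<equiv> Zset r N"
definition "Orb = (\<lambda>g. actX r g (x0 N)) ` carrier G"

lemma normalN: "n \<ge> 1 \<Longrightarrow> N n \<lhd> G" using adm unfolding admissible_seq_def by auto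
lemma subgroupN: "n \<ge> 1 \<Longrightarrow> subgroup (N n) G" using normalN normal_imp_subgroup by blast
lemma finN: "n \<ge> 1 \<Longrightarrow> finite (rcosets\<^bsub>G\<^esub> (N n))" using adm unfolding admissible_seq_def by auto
lemma strictN: "n \<ge> 1 \<Longrightarrow> N (Suc n) \<subset> N n" using adm unfolding admissible_seq_def by auto
lemma grp: "group G" using normalN[of 1] normal.axioms(2) by auto

sublocale Gr: group G by (rule grp)

lemma carrierG: "carrier G = FG_carrier r" by (simp add: FG_def)
lemma multG: "x \<otimes>\<^bsub>G\<^esub> y = fg_mult x y" by (simp add: FG_def)
lemma oneG: "\<one>\<^bsub>G\<^esub> = []" by (simp add: FG_def)

lemma compactU: "compact (UNIV :: 'x set)" using mc unfolding mcmahon_ext_def by auto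
lemma metr: "metrizable_space (euclidean :: 'x topology)" using mc unfolding mcmahon_ext_def by auto
lemma cact: "cont_action r \<phi>" using mc unfolding mcmahon_ext_def by auto
lemma pi_cont: "continuous_map euclidean (topX r N) \<pi>" using mc unfolding mcmahon_ext_def by auto
lemma pi_img: "\<pi> ` UNIV = Xset r N" using mc unfolding mcmahon_ext_def by auto
lemma pi_eqv: "g \<in> carrier G \<Longrightarrow> \<pi> (\<phi> g x) = actX r g (\<pi> x)" using mc unfolding mcmahon_ext_def carrierG by auto
lemma fib1: "p \<in> Xset r N \<Longrightarrow> p \<notin> Orb \<Longrightarrow> card (\<pi> -` {p}) = 1"
  using mc unfolding mcmahon_ext_def Orb_def carrierG by auto
lemma fib2: "p \<in> Orb \<Longrightarrow> card (\<pi> -` {p}) = 2"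
  using mc unfolding mcmahon_ext_def Orb_def carrierG by auto

lemma phi_one: "\<phi> [] x = x" using cact unfolding cont_action_def by auto
lemma phi_mult: "g \<in> carrier G \<Longrightarrow> h \<in> carrier G \<Longrightarrow> \<phi> (g \<otimes>\<^bsub>G\<^esub> h) x = \<phi> g (\<phi> h x)"
  using cact unfolding cont_action_def carrierG multG by auto
lemma phi_cont: "g \<in> carrier G \<Longrightarrow> continuous_on UNIV (\<phi> g)"
  using cact unfolding cont_action_def carrierG by auto

lemma pi_in: "\<pi> q \<in> Xset r N" using pi_img by auto
lemma pi_Y: "fst (\<pi> q) \<in> Ys" using pi_in unfolding Xset_def by (auto simp: mem_Times_iff)
lemma pi_Z: "snd (\<pi> q) \<in> Zs" using pi_in unfolding Xset_def by (auto simp: mem_Times_iff)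
lemma pi_surj: "p \<in> Xset r N \<Longrightarrow> \<exists>q. \<pi> q = p" using pi_img by (metis image_iff)

lemma Orb_X: "p \<in> Orb \<Longrightarrow> p \<in> Xset r N"
proof -
  assume "p \<in> Orb"
  then have "card (\<pi> -` {p}) = 2" by (rule fib2)
  then have "\<pi> -` {p} \<noteq> {}" by (metis card.empty zero_neq_numeral)
  then obtain q where "\<pi> q = p" by blast
  then show ?thesis using pi_in by blast
qed

lemma actX_X: "g \<in> carrier G \<Longrightarrow> p \<in> Xset r N \<Longrightarrow> actX r g p \<in> Xset r N"
  by (metis pi_eqv pi_in pi_surj)

lemma actX_mult: "g \<in> carrier G \<Longrightarrow> h \<in> carrier G \<Longrightarrow> p \<in> Xset r N \<Longrightarrow>
   actX r (g \<otimes>\<^bsub>G\<^esub> h) p = actX r g (actX r h p)"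
  by (metis pi_eqv pi_surj phi_mult Gr.m_closed)

lemma actX_one: "p \<in> Xset r N \<Longrightarrow> actX r [] p = p"
  by (metis pi_eqv pi_surj phi_one Gr.one_closed oneG)

lemma actX_inv: "g \<in> carrier G \<Longrightarrow> p \<in> Xset r N \<Longrightarrow> actX r (inv\<^bsub>G\<^esub> g) (actX r g p) = p"
  by (metis actX_mult actX_one Gr.inv_closed Gr.l_inv oneG)

lemma x0X: "x0 N \<in> Xset r N"
proof -
  have "actX r [] (x0 N) = x0 N"
  proof -
    have "\<And>n. n \<ge> 1 \<Longrightarrow> [] <#\<^bsub>G\<^esub> N n = N n"
      using Gr.lcos_mult_one subgroupN subgroup.subset oneG by metis
    then have "actZ r [] (eZ N) = eZ N" unfolding actZ_def eZ_def by (auto simp: fun_eq_iff)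
    then show ?thesis unfolding actX_def x0_def actY_def by simp
  qed
  moreover have "actX r [] (x0 N) \<in> Orb" unfolding Orb_def using Gr.one_closed oneG by force
  ultimately show ?thesis using Orb_X by simp
qed

lemma Orb_back: "g \<in> carrier G \<Longrightarrow> p \<in> Xset r N \<Longrightarrow> actX r g p \<in> Orb \<Longrightarrow> p \<in> Orb"
proof -
  assume g: "g \<in> carrier G" and p: "p \<in> Xset r N" and o: "actX r g p \<in> Orb"
  then obtain h where h: "h \<in> carrier G" "actX r g p = actX r h (x0 N)" unfolding Orb_def by auto
  have x0X: "x0 N \<in> Xset r N" by (rule x0X)
  have "p = actX r (inv\<^bsub>G\<^esub> g) (actX r h (x0 N))" using actX_inv[OF g p] h by simp
  also have "\<dots> = actX r (inv\<^bsub>G\<^esub> g \<otimes>\<^bsub>G\<^esub> h) (x0 N)" using actX_mult g h x0X by simp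
  finally show ?thesis unfolding Orb_def using g h by blast
qed

definition sec :: "ptX \<Rightarrow> 'x" where "sec p = (SOME q. \<pi> q = p)"

lemma sec: "p \<in> Xset r N \<Longrightarrow> \<pi> (sec p) = p"
  unfolding sec_def by (metis (mono_tags) pi_surj someI)

lemma fib_unique: "p \<in> Xset r N \<Longrightarrow> p \<notin> Orb \<Longrightarrow> \<pi> q = p \<Longrightarrow> q = sec p"
proof -
  assume p: "p \<in> Xset r N" "p \<notin> Orb" and q: "\<pi> q = p"
  have "card (\<pi> -` {p}) = 1" using fib1 p by auto
  then obtain a where a: "\<pi> -` {p} = {a}" using card_1_singletonE by blast
  have "q \<in> \<pi> -` {p}" "sec p \<in> \<pi> -` {p}" using q sec[OF p(1)] by auto
  then show ?thesis using a by auto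
qed

lemma Zs_coset: "z \<in> Zs \<Longrightarrow> n \<ge> 1 \<Longrightarrow> z n \<in> rcosets\<^bsub>G\<^esub> (N n)" unfolding Zset_def by auto
lemma Zs_0: "z \<in> Zs \<Longrightarrow> z 0 = {}" unfolding Zset_def by auto
lemma Zs_step: "z \<in> Zs \<Longrightarrow> n \<ge> 1 \<Longrightarrow> z (Suc n) \<subseteq> z n" unfolding Zset_def by auto

lemma coset_sub: "n \<ge> 1 \<Longrightarrow> c \<in> rcosets\<^bsub>G\<^esub> (N n) \<Longrightarrow> c \<subseteq> carrier G"
  using subgroup.rcosets_carrier[OF subgroupN grp] by blast

lemma coset_ne: "n \<ge> 1 \<Longrightarrow> c \<in> rcosets\<^bsub>G\<^esub> (N n) \<Longrightarrow> c \<noteq> {}"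
proof -
  assume n: "n \<ge> 1" and c: "c \<in> rcosets\<^bsub>G\<^esub> (N n)"
  then obtain g where g: "g \<in> carrier G" "c = N n #>\<^bsub>G\<^esub> g" unfolding RCOSETS_def by auto
  then have "g \<in> c" using Gr.rcos_self subgroupN n by blast
  then show ?thesis by auto
qed

lemma coset_disj: "n \<ge> 1 \<Longrightarrow> c \<in> rcosets\<^bsub>G\<^esub> (N n) \<Longrightarrow> c' \<in> rcosets\<^bsub>G\<^esub> (N n) \<Longrightarrow> c \<inter> c' \<noteq> {} \<Longrightarrow> c = c'"
  using Gr.rcos_disjoint[OF subgroupN] unfolding pairwise_def disjnt_def by blast

lemma Zs_chain: "z \<in> Zs \<Longrightarrow> 1 \<le> m \<Longrightarrow> m \<le> n \<Longrightarrow> z n \<subseteq> z m"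
proof -
  assume z: "z \<in> Zs" and m: "1 \<le> m" and mn: "m \<le> n"
  show ?thesis using mn
  proof (induction n rule: dec_induct)
    case base then show ?case by simp
  next
    case (step k) then show ?case using Zs_step[OF z, of k] m by auto
  qed
qed

lemma Zs_agree: "z \<in> Zs \<Longrightarrow> z' \<in> Zs \<Longrightarrow> 1 \<le> i \<Longrightarrow> i \<le> n \<Longrightarrow> z' n = z n \<Longrightarrow> z' i = z i"
proof -
  assume z: "z \<in> Zs" and z': "z' \<in> Zs" and i: "1 \<le> i" "i \<le> n" and e: "z' n = z n"
  have n1: "n \<ge> 1" using i by simp
  have "z n \<noteq> {}" using coset_ne[OF n1 Zs_coset[OF z n1]] .
  moreover have "z n \<subseteq> z i" "z' n \<subseteq> z' i" using Zs_chain z z' i by auto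
  ultimately have "z i \<inter> z' i \<noteq> {}" using e by auto
  then show ?thesis using coset_disj[of i] Zs_coset z z' i by auto
qed

lemma Zs_eqI: "z \<in> Zs \<Longrightarrow> z' \<in> Zs \<Longrightarrow> (\<And>n. n \<ge> 1 \<Longrightarrow> z' n = z n) \<Longrightarrow> z' = z"
proof
  fix n assume z: "z \<in> Zs" and z': "z' \<in> Zs" and h: "\<And>n. n \<ge> 1 \<Longrightarrow> z' n = z n"
  show "z' n = z n" using h Zs_0 z z' by (cases n) auto
qed

section \<open>Topology\<close>

lemma topspace_topY: "topspace (topY r) = Ys" unfolding topY_def by simp
lemma topspace_topZ: "topspace (topZ r N) = Zs" unfolding topZ_def by simp
lemma topspace_topX: "topspace (topX r N) = Xset r N" unfolding topX_def Xset_def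
  by (simp add: topspace_topY topspace_topZ)

lemma Haus_Y: "Hausdorff_space (topY r)" unfolding topY_def
  by (intro Hausdorff_space_subtopology) (simp add: Hausdorff_space_product_topology)
lemma Haus_Z: "Hausdorff_space (topZ r N)" unfolding topZ_def
  by (intro Hausdorff_space_subtopology) (simp add: Hausdorff_space_product_topology)
lemma Haus_X: "Hausdorff_space (topX r N)" unfolding topX_def
  by (simp add: Hausdorff_space_prod_topology Haus_Y Haus_Z)

lemma coordY_cont: "continuous_map (topY r) (discrete_topology UNIV) (\<lambda>y. y i)"
  unfolding topY_def
  by (intro continuous_map_from_subtopology continuous_map_product_projection) simp

lemma coordZ_cont: "continuous_map (topZ r N) (discrete_topology UNIV) (\<lambda>z. z i)"
  unfolding topZ_def
  by (intro continuous_map_from_subtopology continuous_map_product_projection) simp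

lemma fstpi_cont: "continuous_map euclidean (topY r) (\<lambda>q. fst (\<pi> q))"
  using continuous_map_compose[OF pi_cont[unfolded topX_def] continuous_map_fst[of "topY r" "topZ r N"]]
  by (simp add: o_def)

lemma sndpi_cont: "continuous_map euclidean (topZ r N) (\<lambda>q. snd (\<pi> q))"
  using continuous_map_compose[OF pi_cont[unfolded topX_def] continuous_map_snd[of "topY r" "topZ r N"]]
  by (simp add: o_def)

lemma Acont: "continuous_map euclidean (discrete_topology UNIV) (\<lambda>q. snd (\<pi> q) n)"
  using continuous_map_compose[OF sndpi_cont coordZ_cont[of n]] by (simp add: o_def)

lemma A_open: "open {q. snd (\<pi> q) n \<in> S}"
proof -
  have "openin euclidean {x \<in> topspace euclidean. snd (\<pi> x) n \<in> S}"
  using openin_continuous_map_preimage[OF Acont[of n], of S] by simp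
  then show ?thesis by simp
qed

lemma A_closed: "closed {q. snd (\<pi> q) n \<in> S}"
proof -
  have "closedin euclidean {x \<in> topspace euclidean. snd (\<pi> x) n \<in> S}"
  using closedin_continuous_map_preimage[OF Acont[of n], of S] by simp
  then show ?thesis by simp
qed

lemma fiberY_closed: "y \<in> Ys \<Longrightarrow> closed {q. fst (\<pi> q) = y}"
proof -
  assume y: "y \<in> Ys"
  have c: "closedin (topY r) {y}" using closedin_Hausdorff_singleton[OF Haus_Y, of y] y topspace_topY by simp
  have "closedin euclidean {x \<in> topspace euclidean. fst (\<pi> x) \<in> {y}}"
    using closedin_continuous_map_preimage[OF fstpi_cont c] by simp
  then show ?thesis by simp
qed

lemma closed_map_nbhd:
  assumes p: "p \<in> Xset r N" "p \<notin> Orb" and U: "open U" "sec p \<in> U"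
  shows "\<exists>W. openin (topX r N) W \<and> p \<in> W \<and> (\<forall>q. \<pi> q \<in> W \<longrightarrow> q \<in> U)"
proof -
  have cl: "closed (- U)" using U(1) by (simp add: closed_Compl)
  have "compact (UNIV \<inter> - U)" by (rule compact_Int_closed[OF compactU cl])
  then have "compactin euclidean (- U)" by simp
  then have "compactin (topX r N) (\<pi> ` (- U))" using image_compactin pi_cont by blast
  then have c: "closedin (topX r N) (\<pi> ` (- U))" using compactin_imp_closedin[OF Haus_X] by blast
  have o: "openin (topX r N) (topspace (topX r N) - \<pi> ` (- U))"
    by (rule openin_diff[OF openin_topspace c])
  have "p \<notin> \<pi> ` (- U)"
  proof
    assume "p \<in> \<pi> ` (- U)"
    then obtain q where "q \<notin> U" "\<pi> q = p" by auto
    then show False using fib_unique[OF p] U(2) by auto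
  qed
  then have "p \<in> topspace (topX r N) - \<pi> ` (- U)" using p topspace_topX by auto
  moreover have "\<forall>q. \<pi> q \<in> topspace (topX r N) - \<pi> ` (- U) \<longrightarrow> q \<in> U" by auto
  ultimately show ?thesis using o by blast
qed

lemma cylY_open: "y \<in> Ys \<Longrightarrow> openin (topY r) {y' \<in> Ys. \<forall>i<k. y' i = y i}"
proof -
  assume y: "y \<in> Ys"
  let ?X = "\<lambda>i. if i < k then {y i} else UNIV"
  have "openin (product_topology (\<lambda>_::nat. discrete_topology (UNIV :: letter set)) UNIV) (Pi\<^sub>E UNIV ?X)"
  proof (rule product_topology_basis)
    show "finite {i. ?X i \<noteq> topspace (discrete_topology UNIV)}"
      by (rule finite_subset[of _ "{..<k}"]) auto
  qed auto
  moreover have "{y' \<in> Ys. \<forall>i<k. y' i = y i} = Pi\<^sub>E UNIV ?X \<inter> Ys"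
    unfolding PiE_UNIV_domain Pi_def by (auto simp: if_split_mem2)
  ultimately show ?thesis unfolding topY_def openin_subtopology by blast
qed

lemma cylY_nbhd: "openin (topY r) V \<Longrightarrow> y \<in> V \<Longrightarrow> \<exists>k. \<forall>y'\<in>Ys. (\<forall>i<k. y' i = y i) \<longrightarrow> y' \<in> V"
proof -
  assume V: "openin (topY r) V" and y: "y \<in> V"
  then obtain T where T: "openin (product_topology (\<lambda>_::nat. discrete_topology (UNIV :: letter set)) UNIV) T" "V = T \<inter> Ys"
    unfolding topY_def openin_subtopology by blast
  have yT: "y \<in> T" using y T(2) by blast
  obtain X where X: "y \<in> Pi\<^sub>E UNIV X" "finite {i. X i \<noteq> topspace (discrete_topology UNIV)}" "Pi\<^sub>E UNIV X \<subseteq> T"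
    using product_topology_open_contains_basis[OF T(1) yT] by blast
  have yX: "\<forall>i. y i \<in> X i" using X(1) by (simp add: PiE_UNIV_domain Pi_iff)
  obtain k where k: "{i. X i \<noteq> topspace (discrete_topology UNIV)} \<subseteq> {..<k}" using finite_nat_bounded X(2) by blast
  have "y' \<in> V" if y': "y' \<in> Ys" "\<forall>i<k. y' i = y i" for y'
  proof -
    have "\<forall>i. y' i \<in> X i"
    proof
      fix i show "y' i \<in> X i"
      proof (cases "i < k")
        case True then show ?thesis using y'(2) yX by simp
      next
        case False then have "X i = UNIV" using k by auto
        then show ?thesis by simp
      qed
    qed
    then have "y' \<in> Pi\<^sub>E UNIV X" by (simp add: PiE_UNIV_domain Pi_iff)
    then show ?thesis using X(3) T(2) y'(1) by blast
  qed
  then show ?thesis by blast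
qed

lemma cylZ_nbhd: "openin (topZ r N) V \<Longrightarrow> z \<in> V \<Longrightarrow> \<exists>n\<ge>1. \<forall>z'\<in>Zs. z' n = z n \<longrightarrow> z' \<in> V"
proof -
  assume V: "openin (topZ r N) V" and z: "z \<in> V"
  have "V \<subseteq> topspace (topZ r N)" by (rule openin_subset[OF V])
  then have zZ: "z \<in> Zs" using z topspace_topZ by auto
  obtain T where T: "openin (product_topology (\<lambda>_::nat. discrete_topology (UNIV :: word set set)) UNIV) T" "V = T \<inter> Zs"
    using V unfolding topZ_def openin_subtopology by blast
  have zT: "z \<in> T" using z T(2) by blast
  obtain X where X: "z \<in> Pi\<^sub>E UNIV X" "finite {i. X i \<noteq> topspace (discrete_topology UNIV)}" "Pi\<^sub>E UNIV X \<subseteq> T"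
    using product_topology_open_contains_basis[OF T(1) zT] by blast
  have zX: "\<forall>i. z i \<in> X i" using X(1) by (simp add: PiE_UNIV_domain Pi_iff)
  obtain k where k: "{i. X i \<noteq> topspace (discrete_topology UNIV)} \<subseteq> {..<k}" using finite_nat_bounded X(2) by blast
  define n where "n = max 1 k"
  have "z' \<in> V" if z': "z' \<in> Zs" "z' n = z n" for z'
  proof -
    have "\<forall>i. z' i \<in> X i"
    proof
      fix i show "z' i \<in> X i"
      proof (cases "i < k")
        case True
        have "z' i = z i"
        proof (cases "i = 0")
          case True then show ?thesis using Zs_0[OF zZ] Zs_0[OF z'(1)] by simp
        next
          case False
          have "1 \<le> i" "i \<le> n" using False \<open>i < k\<close> n_def by auto
          then show ?thesis using Zs_agree[OF zZ z'(1)] z'(2) by blast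
        qed
        then show ?thesis using zX by simp
      next
        case False then have "X i = UNIV" using k by auto
        then show ?thesis by simp
      qed
    qed
    then have "z' \<in> Pi\<^sub>E UNIV X" by (simp add: PiE_UNIV_domain Pi_iff)
    then show ?thesis using X(3) T(2) z'(1) by blast
  qed
  moreover have "n \<ge> 1" unfolding n_def by simp
  ultimately show ?thesis by blast
qed

lemma X_nbhd:
  assumes W: "openin (topX r N) W" and yz: "(y, z) \<in> W"
  shows "\<exists>k n. n \<ge> 1 \<and> (\<forall>y'\<in>Ys. \<forall>z'\<in>Zs. (\<forall>i<k. y' i = y i) \<longrightarrow> z' n = z n \<longrightarrow> (y', z') \<in> W)"
proof -
  have "\<forall>x y. (x,y) \<in> W \<longrightarrow> (\<exists>U V. openin (topY r) U \<and> openin (topZ r N) V \<and> x \<in> U \<and> y \<in> V \<and> U \<times> V \<subseteq> W)"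
    using W unfolding topX_def openin_prod_topology_alt .
  then have "\<exists>U V. openin (topY r) U \<and> openin (topZ r N) V \<and> y \<in> U \<and> z \<in> V \<and> U \<times> V \<subseteq> W"
    using yz by simp
  then obtain U V where UV: "openin (topY r) U" "openin (topZ r N) V" "y \<in> U" "z \<in> V" "U \<times> V \<subseteq> W"
    by blast
  obtain k where k: "\<forall>y'\<in>Ys. (\<forall>i<k. y' i = y i) \<longrightarrow> y' \<in> U" using cylY_nbhd[OF UV(1,3)] by blast
  obtain n where n: "n \<ge> 1" "\<forall>z'\<in>Zs. z' n = z n \<longrightarrow> z' \<in> V" using cylZ_nbhd[OF UV(2,4)] by blast
  have "(y', z') \<in> W" if "y' \<in> Ys" "z' \<in> Zs" "\<forall>i<k. y' i = y i" "z' n = z n" for y' z'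
  proof -
    have "y' \<in> U" using k that(1,3) by blast
    moreover have "z' \<in> V" using n(2) that(2,4) by blast
    ultimately show ?thesis using UV(5) by blast
  qed
  then show ?thesis using n(1) by blast
qed



section \<open>Transversals\<close>

definition Mg :: "nat \<Rightarrow> word set" where "Mg j = (if j = 0 then carrier G else N j)"
definition rep :: "word set \<Rightarrow> word" where "rep C = (SOME t. t \<in> C)"
definition Tr :: "nat \<Rightarrow> word set" where
  "Tr i = (if i = 0 then {[]} else (\<lambda>u. rep (N i #>\<^bsub>G\<^esub> u)) ` Mg (i - 1))"
primrec Pw :: "(nat \<Rightarrow> word) \<Rightarrow> nat \<Rightarrow> word" where
  "Pw t 0 = []" | "Pw t (Suc n) = t (Suc n) \<otimes>\<^bsub>G\<^esub> Pw t n"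

lemma Mg_sub: "subgroup (Mg j) G"
  unfolding Mg_def using subgroupN Gr.subgroup_self by auto

lemma Mg_Suc: "Mg (Suc j) = N (Suc j)" unfolding Mg_def by simp

lemma N_sub_Mg: "i \<ge> 1 \<Longrightarrow> N i \<subseteq> Mg (i - 1)"
proof -
  assume i: "i \<ge> 1"
  show ?thesis
  proof (cases "i = 1")
    case True then show ?thesis unfolding Mg_def using subgroup.subset[OF subgroupN[of 1]] by simp
  next
    case False
    then have "i - 1 \<ge> 1" "Suc (i - 1) = i" using i by auto
    then show ?thesis unfolding Mg_def using strictN[of "i - 1"] by auto
  qed
qed

lemma coset_eq_iff:
  assumes "subgroup H G" "a \<in> carrier G" "b \<in> carrier G"
  shows "(H #>\<^bsub>G\<^esub> a = H #>\<^bsub>G\<^esub> b) \<longleftrightarrow> a \<otimes>\<^bsub>G\<^esub> inv\<^bsub>G\<^esub> b \<in> H"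
proof
  assume e: "H #>\<^bsub>G\<^esub> a = H #>\<^bsub>G\<^esub> b"
  have "a \<in> H #>\<^bsub>G\<^esub> a" using Gr.rcos_self assms by blast
  then have "a \<in> H #>\<^bsub>G\<^esub> b" using e by simp
  then show "a \<otimes>\<^bsub>G\<^esub> inv\<^bsub>G\<^esub> b \<in> H" using subgroup.rcos_module_imp[OF assms(1) grp assms(3)] by blast
next
  assume "a \<otimes>\<^bsub>G\<^esub> inv\<^bsub>G\<^esub> b \<in> H"
  then have "a \<in> H #>\<^bsub>G\<^esub> b" using subgroup.rcos_module_rev[OF assms(1) grp assms(3) assms(2)] by blast
  then show "H #>\<^bsub>G\<^esub> a = H #>\<^bsub>G\<^esub> b" using Gr.repr_independence[OF _ assms(3) assms(1)] by metis
qed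

lemma rep_in: "i \<ge> 1 \<Longrightarrow> u \<in> carrier G \<Longrightarrow> rep (N i #>\<^bsub>G\<^esub> u) \<in> N i #>\<^bsub>G\<^esub> u"
  unfolding rep_def by (rule someI[of _ u]) (rule Gr.rcos_self[OF _ subgroupN])

lemma Tr_Mg: "i \<ge> 1 \<Longrightarrow> t \<in> Tr i \<Longrightarrow> t \<in> Mg (i - 1)"
proof -
  assume i: "i \<ge> 1" and t: "t \<in> Tr i"
  then obtain u where u: "u \<in> Mg (i - 1)" "t = rep (N i #>\<^bsub>G\<^esub> u)" unfolding Tr_def by auto
  have uc: "u \<in> carrier G" using u(1) subgroup.subset[OF Mg_sub] by blast
  have "t \<in> N i #>\<^bsub>G\<^esub> u" using rep_in[OF i uc] u(2) by simp
  then obtain h where h: "h \<in> N i" "t = h \<otimes>\<^bsub>G\<^esub> u" unfolding r_coset_def by auto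
  have "h \<in> Mg (i - 1)" using h(1) N_sub_Mg[OF i] by blast
  then show ?thesis using h(2) u(1) subgroup.m_closed[OF Mg_sub] by simp
qed

lemma Tr_carrier: "t \<in> Tr i \<Longrightarrow> t \<in> carrier G"
proof (cases "i = 0")
  case True then show "t \<in> Tr i \<Longrightarrow> t \<in> carrier G" unfolding Tr_def using Gr.one_closed oneG by simp
next
  case False then show "t \<in> Tr i \<Longrightarrow> t \<in> carrier G" using Tr_Mg[of i t] subgroup.subset[OF Mg_sub] by auto
qed

lemma Tr_fin: "finite (Tr i)"
proof (cases "i = 0")
  case True then show ?thesis unfolding Tr_def by simp
next
  case False
  then have i: "i \<ge> 1" by simp
  have "Tr i \<subseteq> rep ` (rcosets\<^bsub>G\<^esub> (N i))"
  proof
    fix t assume "t \<in> Tr i"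
    then obtain u where u: "u \<in> Mg (i - 1)" "t = rep (N i #>\<^bsub>G\<^esub> u)" using False unfolding Tr_def by auto
    have "u \<in> carrier G" using u(1) subgroup.subset[OF Mg_sub] by blast
    then have "N i #>\<^bsub>G\<^esub> u \<in> rcosets\<^bsub>G\<^esub> (N i)" using Gr.rcosetsI subgroup.subset[OF subgroupN[OF i]] by blast
    then show "t \<in> rep ` (rcosets\<^bsub>G\<^esub> (N i))" using u(2) by blast
  qed
  then show ?thesis using finN[OF i] finite_subset by blast
qed

lemma Tr_ne: "Tr i \<noteq> {}"
  unfolding Tr_def using subgroup.one_closed[OF Mg_sub] by auto

lemma Tr_surj: "i \<ge> 1 \<Longrightarrow> u \<in> Mg (i - 1) \<Longrightarrow> \<exists>t\<in>Tr i. N i #>\<^bsub>G\<^esub> t = N i #>\<^bsub>G\<^esub> u"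
proof -
  assume i: "i \<ge> 1" and u: "u \<in> Mg (i - 1)"
  have uc: "u \<in> carrier G" using u subgroup.subset[OF Mg_sub] by blast
  let ?t = "rep (N i #>\<^bsub>G\<^esub> u)"
  have "?t \<in> Tr i" using i u unfolding Tr_def by auto
  moreover have "N i #>\<^bsub>G\<^esub> u = N i #>\<^bsub>G\<^esub> ?t"
    using Gr.repr_independence[OF rep_in[OF i uc] uc subgroupN[OF i]] .
  ultimately show ?thesis by metis
qed

lemma Tr_rep: "i \<ge> 1 \<Longrightarrow> t \<in> Tr i \<Longrightarrow> t = rep (N i #>\<^bsub>G\<^esub> t)"
proof -
  assume i: "i \<ge> 1" and t: "t \<in> Tr i"
  then obtain u where u: "u \<in> Mg (i - 1)" "t = rep (N i #>\<^bsub>G\<^esub> u)" unfolding Tr_def by auto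
  have uc: "u \<in> carrier G" using u(1) subgroup.subset[OF Mg_sub] by blast
  have "N i #>\<^bsub>G\<^esub> u = N i #>\<^bsub>G\<^esub> t"
    using Gr.repr_independence[OF rep_in[OF i uc] uc subgroupN[OF i]] u(2) by simp
  then show ?thesis using u(2) by simp
qed

lemma Tr_inj: "i \<ge> 1 \<Longrightarrow> t \<in> Tr i \<Longrightarrow> t' \<in> Tr i \<Longrightarrow> N i #>\<^bsub>G\<^esub> t = N i #>\<^bsub>G\<^esub> t' \<Longrightarrow> t = t'"
  using Tr_rep by metis

lemma Tr_card: "i \<ge> 2 \<Longrightarrow> card (Tr i) \<ge> 2"
proof -
  assume i: "i \<ge> 2"
  then have i1: "i \<ge> 1" "i - 1 \<ge> 1" "Suc (i - 1) = i" by auto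
  obtain u where u: "u \<in> N (i - 1)" "u \<notin> N i" using strictN[OF i1(2)] i1(3) by auto
  have "i - 1 \<noteq> 0" using i by simp
  then have uM: "u \<in> Mg (i - 1)" using u(1) unfolding Mg_def by simp
  have uc: "u \<in> carrier G" using uM subgroup.subset[OF Mg_sub] by blast
  have oM: "\<one>\<^bsub>G\<^esub> \<in> Mg (i - 1)" using subgroup.one_closed[OF Mg_sub] .
  obtain t1 where t1: "t1 \<in> Tr i" "N i #>\<^bsub>G\<^esub> t1 = N i #>\<^bsub>G\<^esub> \<one>\<^bsub>G\<^esub>" using Tr_surj[OF i1(1) oM] by blast
  obtain t2 where t2: "t2 \<in> Tr i" "N i #>\<^bsub>G\<^esub> t2 = N i #>\<^bsub>G\<^esub> u" using Tr_surj[OF i1(1) uM] by blast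
  have "N i #>\<^bsub>G\<^esub> \<one>\<^bsub>G\<^esub> = N i" using Gr.coset_mult_one subgroup.subset[OF subgroupN[OF i1(1)]] by blast
  have "t1 \<noteq> t2"
  proof
    assume "t1 = t2"
    then have "N i #>\<^bsub>G\<^esub> u = N i" using t1 t2 \<open>N i #>\<^bsub>G\<^esub> \<one>\<^bsub>G\<^esub> = N i\<close> by simp
    then have "u \<in> N i" using Gr.coset_join1[OF _ uc subgroupN[OF i1(1)]] by blast
    then show False using u by simp
  qed
  then have "card {t1, t2} = 2" by simp
  moreover have "{t1, t2} \<subseteq> Tr i" using t1 t2 by simp
  ultimately show ?thesis using card_mono[OF Tr_fin] by metis
qed

lemma Pw_carrier: "(\<forall>i\<in>{1..n}. t i \<in> carrier G) \<Longrightarrow> Pw t n \<in> carrier G"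
  by (induction n) (auto simp: oneG[symmetric])

lemma Pw_local: "(\<forall>i\<in>{1..n}. t i = t' i) \<Longrightarrow> Pw t n = Pw t' n"
  by (induction n) auto

lemma Pw_carrier': "t \<in> Pi\<^sub>E {1..n} Tr \<Longrightarrow> Pw t n \<in> carrier G"
proof -
  assume t: "t \<in> Pi\<^sub>E {1..n} Tr"
  have "\<forall>i\<in>{1..n}. t i \<in> carrier G" using t Tr_carrier by (auto simp: PiE_iff)
  then show ?thesis by (rule Pw_carrier)
qed

lemma cancel_r: "a \<in> carrier G \<Longrightarrow> b \<in> carrier G \<Longrightarrow> p \<in> carrier G \<Longrightarrow>
  (a \<otimes>\<^bsub>G\<^esub> p) \<otimes>\<^bsub>G\<^esub> inv\<^bsub>G\<^esub> (b \<otimes>\<^bsub>G\<^esub> p) = a \<otimes>\<^bsub>G\<^esub> inv\<^bsub>G\<^esub> b"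
proof -
  assume c: "a \<in> carrier G" "b \<in> carrier G" "p \<in> carrier G"
  have "(a \<otimes>\<^bsub>G\<^esub> p) \<otimes>\<^bsub>G\<^esub> inv\<^bsub>G\<^esub> (b \<otimes>\<^bsub>G\<^esub> p) = (a \<otimes>\<^bsub>G\<^esub> p) \<otimes>\<^bsub>G\<^esub> (inv\<^bsub>G\<^esub> p \<otimes>\<^bsub>G\<^esub> inv\<^bsub>G\<^esub> b)"
    using c by (simp add: Gr.inv_mult_group)
  also have "\<dots> = a \<otimes>\<^bsub>G\<^esub> (p \<otimes>\<^bsub>G\<^esub> (inv\<^bsub>G\<^esub> p \<otimes>\<^bsub>G\<^esub> inv\<^bsub>G\<^esub> b))" using c by (simp add: Gr.m_assoc)
  also have "p \<otimes>\<^bsub>G\<^esub> (inv\<^bsub>G\<^esub> p \<otimes>\<^bsub>G\<^esub> inv\<^bsub>G\<^esub> b) = inv\<^bsub>G\<^esub> b" using c by (simp add: Gr.m_assoc[symmetric])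
  finally show ?thesis .
qed

lemma Pw_exist: "g \<in> carrier G \<Longrightarrow> \<exists>t\<in>Pi\<^sub>E {1..n} Tr. Mg n #>\<^bsub>G\<^esub> Pw t n = Mg n #>\<^bsub>G\<^esub> g"
proof (induction n arbitrary: g)
  case 0
  have "Mg 0 #>\<^bsub>G\<^esub> Pw (\<lambda>_. undefined) 0 = carrier G #>\<^bsub>G\<^esub> \<one>\<^bsub>G\<^esub>" by (simp add: Mg_def oneG)
  also have "\<dots> = carrier G" by (rule Gr.coset_mult_one) simp
  finally have "Mg 0 #>\<^bsub>G\<^esub> Pw (\<lambda>_. undefined) 0 = carrier G" .
  moreover have "Mg 0 #>\<^bsub>G\<^esub> g = carrier G"
    unfolding Mg_def using Gr.coset_join2[OF 0 Gr.subgroup_self 0] by simp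
  moreover have "(\<lambda>_. undefined) \<in> Pi\<^sub>E {1..0::nat} Tr" by simp
  ultimately show ?case by metis
next
  case (Suc n)
  obtain t where t: "t \<in> Pi\<^sub>E {1..n} Tr" "Mg n #>\<^bsub>G\<^esub> Pw t n = Mg n #>\<^bsub>G\<^esub> g" using Suc.IH[OF Suc.prems] by blast
  let ?p = "Pw t n"
  have pc: "?p \<in> carrier G" using Pw_carrier'[OF t(1)] .
  have gc: "g \<in> carrier G" by (rule Suc.prems)
  have u: "g \<otimes>\<^bsub>G\<^esub> inv\<^bsub>G\<^esub> ?p \<in> Mg n" using coset_eq_iff[OF Mg_sub[of n] gc pc] t(2) by simp
  then obtain \<tau> where tau: "\<tau> \<in> Tr (Suc n)" "N (Suc n) #>\<^bsub>G\<^esub> \<tau> = N (Suc n) #>\<^bsub>G\<^esub> (g \<otimes>\<^bsub>G\<^esub> inv\<^bsub>G\<^esub> ?p)"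
    using Tr_surj[of "Suc n"] by auto
  have tc: "\<tau> \<in> carrier G" using Tr_carrier tau(1) by blast
  have ugc: "g \<otimes>\<^bsub>G\<^esub> inv\<^bsub>G\<^esub> ?p \<in> carrier G" using gc pc by simp
  have h: "\<tau> \<otimes>\<^bsub>G\<^esub> inv\<^bsub>G\<^esub> (g \<otimes>\<^bsub>G\<^esub> inv\<^bsub>G\<^esub> ?p) \<in> N (Suc n)"
    using coset_eq_iff[OF subgroupN tc ugc] tau(2) by simp
  have eq: "\<tau> \<otimes>\<^bsub>G\<^esub> inv\<^bsub>G\<^esub> (g \<otimes>\<^bsub>G\<^esub> inv\<^bsub>G\<^esub> ?p) = (\<tau> \<otimes>\<^bsub>G\<^esub> ?p) \<otimes>\<^bsub>G\<^esub> inv\<^bsub>G\<^esub> g"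
    using tc pc gc by (simp add: Gr.inv_mult_group Gr.m_assoc)
  define t' where "t' = t(Suc n := \<tau>)"
  have t'E: "t' \<in> Pi\<^sub>E {1..Suc n} Tr" using t(1) tau(1) unfolding t'_def by (auto simp: PiE_iff extensional_def)
  have "Pw t' n = ?p" by (rule Pw_local) (auto simp: t'_def)
  then have Pt': "Pw t' (Suc n) = \<tau> \<otimes>\<^bsub>G\<^esub> ?p" by (simp add: t'_def)
  have "Mg (Suc n) #>\<^bsub>G\<^esub> (\<tau> \<otimes>\<^bsub>G\<^esub> ?p) = Mg (Suc n) #>\<^bsub>G\<^esub> g"
    using coset_eq_iff[OF Mg_sub _ gc, of "\<tau> \<otimes>\<^bsub>G\<^esub> ?p" "Suc n"] tc pc h eq by (simp add: Mg_Suc)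
  then show ?case using t'E Pt' by metis
qed

lemma Pw_inj: "s \<in> Pi\<^sub>E {1..n} Tr \<Longrightarrow> s' \<in> Pi\<^sub>E {1..n} Tr \<Longrightarrow> Mg n #>\<^bsub>G\<^esub> Pw s n = Mg n #>\<^bsub>G\<^esub> Pw s' n \<Longrightarrow> s = s'"
proof (induction n arbitrary: s s')
  case 0 then show ?case by simp
next
  case (Suc n)
  let ?a = "s (Suc n)" and ?b = "s' (Suc n)" and ?p = "Pw s n" and ?p' = "Pw s' n"
  define s0 where "s0 = restrict s {1..n}"
  define s0' where "s0' = restrict s' {1..n}"
  have s0E: "s0 \<in> Pi\<^sub>E {1..n} Tr" "s0' \<in> Pi\<^sub>E {1..n} Tr" using Suc.prems(1,2) unfolding s0_def s0'_def by (auto simp: PiE_iff)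
  have ps: "Pw s0 n = ?p" "Pw s0' n = ?p'" unfolding s0_def s0'_def by (rule Pw_local, simp)+
  have aT: "?a \<in> Tr (Suc n)" "?b \<in> Tr (Suc n)" using Suc.prems(1,2) by (auto simp: PiE_iff)
  have aM: "?a \<in> Mg n" "?b \<in> Mg n" using Tr_Mg[OF _ aT(1)] Tr_Mg[OF _ aT(2)] by auto
  have ac: "?a \<in> carrier G" "?b \<in> carrier G" using aT Tr_carrier by auto
  have pc: "?p \<in> carrier G" "?p' \<in> carrier G" using Pw_carrier'[OF s0E(1)] Pw_carrier'[OF s0E(2)] ps by auto
  have "N (Suc n) #>\<^bsub>G\<^esub> (?a \<otimes>\<^bsub>G\<^esub> ?p) = N (Suc n) #>\<^bsub>G\<^esub> (?b \<otimes>\<^bsub>G\<^esub> ?p')"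
    using Suc.prems(3) by (simp add: Mg_Suc)
  then have x: "(?a \<otimes>\<^bsub>G\<^esub> ?p) \<otimes>\<^bsub>G\<^esub> inv\<^bsub>G\<^esub> (?b \<otimes>\<^bsub>G\<^esub> ?p') \<in> N (Suc n)"
    using coset_eq_iff[OF subgroupN, of "Suc n"] ac pc by simp
  then have xM: "(?a \<otimes>\<^bsub>G\<^esub> ?p) \<otimes>\<^bsub>G\<^esub> inv\<^bsub>G\<^esub> (?b \<otimes>\<^bsub>G\<^esub> ?p') \<in> Mg n" using N_sub_Mg[of "Suc n"] by auto
  have "inv\<^bsub>G\<^esub> ?a \<otimes>\<^bsub>G\<^esub> ((?a \<otimes>\<^bsub>G\<^esub> ?p) \<otimes>\<^bsub>G\<^esub> inv\<^bsub>G\<^esub> (?b \<otimes>\<^bsub>G\<^esub> ?p')) \<otimes>\<^bsub>G\<^esub> ?b = ?p \<otimes>\<^bsub>G\<^esub> inv\<^bsub>G\<^esub> ?p'"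
    using ac pc by (simp add: Gr.inv_mult_group Gr.m_assoc flip: Gr.m_assoc[of "inv\<^bsub>G\<^esub> ?a"])
  moreover have "inv\<^bsub>G\<^esub> ?a \<otimes>\<^bsub>G\<^esub> ((?a \<otimes>\<^bsub>G\<^esub> ?p) \<otimes>\<^bsub>G\<^esub> inv\<^bsub>G\<^esub> (?b \<otimes>\<^bsub>G\<^esub> ?p')) \<otimes>\<^bsub>G\<^esub> ?b \<in> Mg n"
    using aM xM subgroup.m_closed[OF Mg_sub] subgroup.m_inv_closed[OF Mg_sub] by meson
  ultimately have "?p \<otimes>\<^bsub>G\<^esub> inv\<^bsub>G\<^esub> ?p' \<in> Mg n" by simp
  then have "Mg n #>\<^bsub>G\<^esub> Pw s0 n = Mg n #>\<^bsub>G\<^esub> Pw s0' n" using coset_eq_iff[OF Mg_sub pc] ps by simp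
  then have s00: "s0 = s0'" using Suc.IH[OF s0E] by simp
  then have pp: "?p = ?p'" using ps by simp
  have "(?a \<otimes>\<^bsub>G\<^esub> ?p) \<otimes>\<^bsub>G\<^esub> inv\<^bsub>G\<^esub> (?b \<otimes>\<^bsub>G\<^esub> ?p) = ?a \<otimes>\<^bsub>G\<^esub> inv\<^bsub>G\<^esub> ?b"
    using ac pc by (simp add: cancel_r)
  then have "?a \<otimes>\<^bsub>G\<^esub> inv\<^bsub>G\<^esub> ?b \<in> N (Suc n)" using x pp by simp
  then have "N (Suc n) #>\<^bsub>G\<^esub> ?a = N (Suc n) #>\<^bsub>G\<^esub> ?b" using coset_eq_iff[OF subgroupN, of "Suc n"] ac by simp
  then have ab: "?a = ?b" using Tr_inj[OF _ aT] by simp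
  show ?case
  proof
    fix i show "s i = s' i"
    proof (cases "i \<in> {1..n}")
      case True then show ?thesis using s00 unfolding s0_def s0'_def by (metis restrict_apply')
    next
      case False
      show ?thesis
      proof (cases "i = Suc n")
        case True then show ?thesis using ab by simp
      next
        case False
        then have "i \<notin> {1..Suc n}" using \<open>i \<notin> {1..n}\<close> by auto
        then show ?thesis using Suc.prems(1,2) by (auto simp: PiE_iff extensional_def)
      qed
    qed
  qed
qed



section \<open>The measurable space on Z\<close>

definition Cyl :: "nat \<Rightarrow> word set \<Rightarrow> (nat \<Rightarrow> word set) set" where "Cyl n c = {z \<in> Zs. z n = c}"
definition ZE :: "(nat \<Rightarrow> word set) set set" where
  "ZE = (\<Union>n\<in>{1..}. Cyl n ` (rcosets\<^bsub>G\<^esub> (N n))) \<union> {{}, Zs}"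
definition Zm :: "(nat \<Rightarrow> word set) measure" where "Zm = sigma Zs ZE"

lemma ZE_Pow: "ZE \<subseteq> Pow Zs" unfolding ZE_def Cyl_def by auto
lemma space_Zm: "space Zm = Zs" unfolding Zm_def by (simp add: space_measure_of_conv)
lemma sets_Zm: "sets Zm = sigma_sets Zs ZE" unfolding Zm_def using ZE_Pow by (simp add: sets_measure_of)

lemma ZE_cases: "a \<in> ZE \<Longrightarrow> a = {} \<or> a = Zs \<or> (\<exists>n c. n \<ge> 1 \<and> c \<in> rcosets\<^bsub>G\<^esub> (N n) \<and> a = Cyl n c)"
  unfolding ZE_def by auto

lemma Cyl_ZE: "n \<ge> 1 \<Longrightarrow> c \<in> rcosets\<^bsub>G\<^esub> (N n) \<Longrightarrow> Cyl n c \<in> ZE" unfolding ZE_def by auto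
lemma Cyl_empty: "n \<ge> 1 \<Longrightarrow> c \<notin> rcosets\<^bsub>G\<^esub> (N n) \<Longrightarrow> Cyl n c = {}"
  unfolding Cyl_def using Zs_coset by blast
lemma Cyl_sub: "Cyl n c \<subseteq> Zs" unfolding Cyl_def by auto

lemma Cyl_sets: "n \<ge> 1 \<Longrightarrow> Cyl n c \<in> sets Zm"
proof (cases "c \<in> rcosets\<^bsub>G\<^esub> (N n)")
  case True
  assume n: "n \<ge> 1"
  then have "Cyl n c \<in> ZE" using Cyl_ZE True by blast
  then show ?thesis unfolding sets_Zm by (rule sigma_sets.Basic)
next
  case False
  assume n: "n \<ge> 1"
  then show ?thesis using Cyl_empty[OF n False] by simp
qed

lemma Cyl_Int: "1 \<le> m \<Longrightarrow> m \<le> n \<Longrightarrow> Cyl n c \<inter> Cyl m c' = Cyl n c \<or> Cyl n c \<inter> Cyl m c' = {}"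
proof -
  assume m: "1 \<le> m" "m \<le> n"
  show ?thesis
  proof (cases "Cyl n c \<inter> Cyl m c' = {}")
    case True then show ?thesis by simp
  next
    case False
    then obtain z where z: "z \<in> Zs" "z n = c" "z m = c'" unfolding Cyl_def by auto
    have "Cyl n c \<subseteq> Cyl m c'"
    proof
      fix z' assume "z' \<in> Cyl n c"
      then have z': "z' \<in> Zs" "z' n = c" unfolding Cyl_def by auto
      then have "z' m = z m" using Zs_agree[OF z(1) z'(1) m] z(2) by simp
      then show "z' \<in> Cyl m c'" using z' z(3) unfolding Cyl_def by simp
    qed
    then show ?thesis by blast
  qed
qed

lemma ZE_Int_stable: "Int_stable ZE"
proof (rule Int_stableI)
  fix a b assume a: "a \<in> ZE" and b: "b \<in> ZE"
  have aZ: "a \<subseteq> Zs" and bZ: "b \<subseteq> Zs" using a b ZE_Pow by auto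
  have e: "{} \<in> ZE" unfolding ZE_def by simp
  show "a \<inter> b \<in> ZE"
  proof (cases "a = {} \<or> b = {}")
    case True then show ?thesis using e by auto
  next
    case F1: False
    show ?thesis
    proof (cases "a = Zs")
      case True then have "a \<inter> b = b" using bZ by auto
      then show ?thesis using b by simp
    next
      case F2: False
      show ?thesis
      proof (cases "b = Zs")
        case True then have "a \<inter> b = a" using aZ by auto
        then show ?thesis using a by simp
      next
        case F3: False
        obtain n c where nc: "n \<ge> 1" "c \<in> rcosets\<^bsub>G\<^esub> (N n)" "a = Cyl n c" using ZE_cases[OF a] F1 F2 by blast
        obtain m c' where mc: "m \<ge> 1" "c' \<in> rcosets\<^bsub>G\<^esub> (N m)" "b = Cyl m c'" using ZE_cases[OF b] F1 F3 by blast
        show ?thesis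
        proof (cases "m \<le> n")
          case True
          then show ?thesis using Cyl_Int[OF mc(1) True, of c c'] nc mc e a by auto
        next
          case False
          then have nm: "n \<le> m" by simp
          show ?thesis using Cyl_Int[OF nc(1) nm, of c' c] nc mc e b by (auto simp: Int_commute)
        qed
      qed
    qed
  qed
qed

lemma ZE_countable: "countable ZE"
proof -
  have c1: "countable {1::nat..}" by (rule countableI_type)
  have c2: "countable (Cyl n ` (rcosets\<^bsub>G\<^esub> (N n)))" if "n \<in> {1..}" for n
    using finN[of n] that by (intro countable_finite finite_imageI) auto
  have "countable (\<Union>n\<in>{1..}. Cyl n ` (rcosets\<^bsub>G\<^esub> (N n)))"
    by (rule countable_UN[OF c1 c2])
  then show ?thesis unfolding ZE_def by simp
qed

lemma single_Zm: "z \<in> Zs \<Longrightarrow> {z} \<in> sets Zm"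
proof -
  assume z: "z \<in> Zs"
  have "{z} = (\<Inter>n\<in>{1..}. Cyl n (z n))"
  proof
    show "{z} \<subseteq> (\<Inter>n\<in>{1..}. Cyl n (z n))" using z unfolding Cyl_def by auto
    show "(\<Inter>n\<in>{1..}. Cyl n (z n)) \<subseteq> {z}"
    proof
      fix z' assume h: "z' \<in> (\<Inter>n\<in>{1..}. Cyl n (z n))"
      then have "z' \<in> Cyl 1 (z 1)" by auto
      then have z'Z: "z' \<in> Zs" unfolding Cyl_def by auto
      have "\<And>n. n \<ge> 1 \<Longrightarrow> z' n = z n" using h unfolding Cyl_def by auto
      then have "z' = z" using Zs_eqI[OF z z'Z] by blast
      then show "z' \<in> {z}" by simp
    qed
  qed
  moreover have "(\<Inter>n\<in>{1..}. Cyl n (z n)) \<in> sets Zm"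
    by (rule sets.countable_INT') (auto intro: Cyl_sets)
  ultimately show ?thesis by simp
qed

lemma countable_Zm: "countable C \<Longrightarrow> C \<subseteq> Zs \<Longrightarrow> C \<in> sets Zm"
proof -
  assume C: "countable C" "C \<subseteq> Zs"
  have "C = (\<Union>z\<in>C. {z})" by auto
  moreover have "(\<Union>z\<in>C. {z}) \<in> sets Zm"
    by (rule sets.countable_UN'[OF C(1)]) (use C(2) single_Zm in blast)
  ultimately show ?thesis by simp
qed

section \<open>Haar measure\<close>

definition Om :: "(nat \<Rightarrow> word) measure" where "Om = PiM UNIV (\<lambda>i. uniform_count_measure (Tr i))"

lemma space_Om: "space Om = Pi\<^sub>E UNIV Tr" unfolding Om_def by (simp add: space_PiM space_uniform_count_measure)

lemma prob_Om: "prob_space Om" unfolding Om_def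
  by (rule prob_space_PiM) (simp add: prob_space_uniform_count_measure Tr_fin Tr_ne)

definition Zmap :: "(nat \<Rightarrow> word) \<Rightarrow> (nat \<Rightarrow> word set)" where
  "Zmap \<omega> = (\<lambda>n. if n = 0 then {} else N n #>\<^bsub>G\<^esub> Pw \<omega> n)"

lemma Om_Tr: "\<omega> \<in> space Om \<Longrightarrow> \<omega> i \<in> Tr i" unfolding space_Om by (auto simp: PiE_iff)

lemma Om_carrier: "\<omega> \<in> space Om \<Longrightarrow> Pw \<omega> n \<in> carrier G"
  using Pw_carrier Om_Tr Tr_carrier by blast

lemma Zmap_Zs: "\<omega> \<in> space Om \<Longrightarrow> Zmap \<omega> \<in> Zs"
proof -
  assume w: "\<omega> \<in> space Om"
  have "Zmap \<omega> (Suc n) \<subseteq> Zmap \<omega> n" if n: "n \<ge> 1" for n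
  proof
    fix x assume "x \<in> Zmap \<omega> (Suc n)"
    then have "x \<in> N (Suc n) #>\<^bsub>G\<^esub> (\<omega> (Suc n) \<otimes>\<^bsub>G\<^esub> Pw \<omega> n)" unfolding Zmap_def by simp
    then obtain h where h: "h \<in> N (Suc n)" "x = h \<otimes>\<^bsub>G\<^esub> (\<omega> (Suc n) \<otimes>\<^bsub>G\<^esub> Pw \<omega> n)" unfolding r_coset_def by auto
    have "\<omega> (Suc n) \<in> Mg n" using Tr_Mg[of "Suc n" "\<omega> (Suc n)"] Om_Tr[OF w] by simp
    then have a: "\<omega> (Suc n) \<in> N n" using n by (simp add: Mg_def)
    have hn: "h \<in> N n" using h(1) strictN[OF n] by auto
    have ha: "h \<otimes>\<^bsub>G\<^esub> \<omega> (Suc n) \<in> N n" using subgroup.m_closed[OF subgroupN[OF n] hn a] .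
    have c: "h \<in> carrier G" "\<omega> (Suc n) \<in> carrier G" "Pw \<omega> n \<in> carrier G"
      using hn a subgroup.subset[OF subgroupN[OF n]] Om_carrier[OF w] by auto
    have "x = (h \<otimes>\<^bsub>G\<^esub> \<omega> (Suc n)) \<otimes>\<^bsub>G\<^esub> Pw \<omega> n" using h(2) c by (simp add: Gr.m_assoc)
    then have "x \<in> N n #>\<^bsub>G\<^esub> Pw \<omega> n" using Gr.rcosI[OF ha subgroup.subset[OF subgroupN[OF n]] c(3)] by simp
    then show "x \<in> Zmap \<omega> n" unfolding Zmap_def using n by simp
  qed
  moreover have "Zmap \<omega> n \<in> rcosets\<^bsub>G\<^esub> (N n)" if n: "n \<ge> 1" for n
    unfolding Zmap_def using n Gr.rcosetsI[OF subgroup.subset[OF subgroupN[OF n]] Om_carrier[OF w]] by simp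
  moreover have "Zmap \<omega> 0 = {}" unfolding Zmap_def by simp
  ultimately show ?thesis unfolding Zset_def by blast
qed

lemma comp_meas: "(\<lambda>\<omega>. \<omega> i) \<in> measurable Om (count_space UNIV)"
proof -
  have "(\<lambda>\<omega>. \<omega> i) \<in> measurable Om (uniform_count_measure (Tr i))" unfolding Om_def
    by (rule measurable_component_singleton) simp
  moreover have "(\<lambda>x. x) \<in> measurable (uniform_count_measure (Tr i)) (count_space UNIV)"
    by (subst measurable_cong_sets[OF sets_uniform_count_measure_count_space refl]) simp
  ultimately show ?thesis using measurable_compose by blast
qed

lemma Pw_meas: "(\<lambda>\<omega>. Pw \<omega> n) \<in> measurable Om (count_space UNIV)"
proof (induction n)
  case 0 then show ?case by simp
next
  case (Suc n)
  have "(\<lambda>\<omega>. (\<omega> (Suc n), Pw \<omega> n)) \<in> measurable Om (count_space UNIV \<Otimes>\<^sub>M count_space UNIV)"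
    by (rule measurable_Pair[OF comp_meas Suc.IH])
  also have "count_space UNIV \<Otimes>\<^sub>M count_space UNIV = count_space (UNIV :: (word \<times> word) set)"
    using pair_measure_countable[of "UNIV :: word set" "UNIV :: word set"] by simp
  finally have p: "(\<lambda>\<omega>. (\<omega> (Suc n), Pw \<omega> n)) \<in> measurable Om (count_space UNIV)" .
  have q: "(\<lambda>p. fst p \<otimes>\<^bsub>G\<^esub> snd p) \<in> measurable (count_space UNIV) (count_space (UNIV :: word set))" by simp
  from measurable_compose[OF p q] show ?case by simp
qed

lemma Zmap_meas: "Zmap \<in> measurable Om Zm"
  unfolding Zm_def
proof (rule measurable_measure_of[OF ZE_Pow])
  show "Zmap \<in> space Om \<rightarrow> Zs" using Zmap_Zs by blast
next
  fix A assume A: "A \<in> ZE"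
  show "Zmap -` A \<inter> space Om \<in> sets Om"
  proof (cases "A = {} \<or> A = Zs")
    case True
    then show ?thesis
    proof
      assume "A = {}" then show ?thesis by simp
    next
      assume "A = Zs" then have "Zmap -` A \<inter> space Om = space Om" using Zmap_Zs by auto
      then show ?thesis by simp
    qed
  next
    case False
    then obtain n c where nc: "n \<ge> 1" "A = Cyl n c" using ZE_cases[OF A] by blast
    have "Zmap -` A \<inter> space Om = (\<lambda>\<omega>. Pw \<omega> n) -` {g. N n #>\<^bsub>G\<^esub> g = c} \<inter> space Om"
      using nc Zmap_Zs unfolding Cyl_def Zmap_def by auto
    moreover have "(\<lambda>\<omega>. Pw \<omega> n) -` {g. N n #>\<^bsub>G\<^esub> g = c} \<inter> space Om \<in> sets Om"
      using measurable_sets[OF Pw_meas[of n], of "{g. N n #>\<^bsub>G\<^esub> g = c}"] by simp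
    ultimately show ?thesis by simp
  qed
qed

definition H :: "(nat \<Rightarrow> word set) measure" where "H = distr Om Zm Zmap"

lemma prob_H: "prob_space H" unfolding H_def by (rule prob_space.prob_space_distr[OF prob_Om Zmap_meas])
lemma sets_H: "sets H = sets Zm" unfolding H_def by simp
lemma space_H: "space H = Zs" unfolding H_def by (simp add: space_Zm)

definition kap :: "nat \<Rightarrow> real" where "kap n = (\<Prod>i\<in>{1..n}. 1 / real (card (Tr i)))"

lemma H_Cyl: "n \<ge> 1 \<Longrightarrow> c \<in> rcosets\<^bsub>G\<^esub> (N n) \<Longrightarrow> emeasure H (Cyl n c) = ennreal (kap n)"
proof -
  assume n: "n \<ge> 1" and c: "c \<in> rcosets\<^bsub>G\<^esub> (N n)"
  obtain g where g: "g \<in> carrier G" "c = N n #>\<^bsub>G\<^esub> g" using c unfolding RCOSETS_def by auto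
  obtain t where t: "t \<in> Pi\<^sub>E {1..n} Tr" "Mg n #>\<^bsub>G\<^esub> Pw t n = Mg n #>\<^bsub>G\<^esub> g" using Pw_exist[OF g(1)] by blast
  have Mgn: "Mg n = N n" using n unfolding Mg_def by simp
  let ?M = "\<lambda>i. uniform_count_measure (Tr i)"
  have sub1: "Zmap -` Cyl n c \<inter> space Om \<subseteq> prod_emb UNIV ?M {1..n} (Pi\<^sub>E {1..n} (\<lambda>i. {t i}))"
  proof
    fix \<omega> assume "\<omega> \<in> Zmap -` Cyl n c \<inter> space Om"
    then have w: "\<omega> \<in> space Om" "N n #>\<^bsub>G\<^esub> Pw \<omega> n = c" unfolding Cyl_def Zmap_def using n by auto
    let ?s = "restrict \<omega> {1..n}"
    have sE: "?s \<in> Pi\<^sub>E {1..n} Tr" using Om_Tr[OF w(1)] by (auto simp: PiE_iff)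
    have "Pw ?s n = Pw \<omega> n" by (rule Pw_local) simp
    then have "Mg n #>\<^bsub>G\<^esub> Pw ?s n = Mg n #>\<^bsub>G\<^esub> Pw t n" using w(2) t(2) g(2) Mgn by simp
    then have st: "?s = t" using Pw_inj[OF sE t(1)] by simp
    have "t \<in> Pi\<^sub>E {1..n} (\<lambda>i. {t i})" using t(1) by (auto simp: PiE_iff)
    then show "\<omega> \<in> prod_emb UNIV ?M {1..n} (Pi\<^sub>E {1..n} (\<lambda>i. {t i}))"
      unfolding prod_emb_def using w(1) st by (simp add: space_Om space_uniform_count_measure)
  qed
  have sub2: "prod_emb UNIV ?M {1..n} (Pi\<^sub>E {1..n} (\<lambda>i. {t i})) \<subseteq> Zmap -` Cyl n c \<inter> space Om"
  proof
    fix \<omega> assume "\<omega> \<in> prod_emb UNIV ?M {1..n} (Pi\<^sub>E {1..n} (\<lambda>i. {t i}))"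
    then have w: "\<omega> \<in> Pi\<^sub>E UNIV Tr" "restrict \<omega> {1..n} \<in> Pi\<^sub>E {1..n} (\<lambda>i. {t i})"
      unfolding prod_emb_def by (auto simp: space_uniform_count_measure)
    have "\<forall>i\<in>{1..n}. \<omega> i = t i"
    proof
      fix i assume i: "i \<in> {1..n}"
      then have "restrict \<omega> {1..n} i \<in> {t i}" using w(2) by (auto simp: PiE_iff)
      then show "\<omega> i = t i" using i by simp
    qed
    then have "Pw \<omega> n = Pw t n" by (rule Pw_local)
    then have "Zmap \<omega> n = c" unfolding Zmap_def using n t(2) g(2) Mgn by simp
    moreover have "\<omega> \<in> space Om" using w(1) space_Om by simp
    ultimately show "\<omega> \<in> Zmap -` Cyl n c \<inter> space Om" unfolding Cyl_def using Zmap_Zs by auto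
  qed
  have eq: "Zmap -` Cyl n c \<inter> space Om = prod_emb UNIV ?M {1..n} (Pi\<^sub>E {1..n} (\<lambda>i. {t i}))"
    using sub1 sub2 by (rule equalityI)
  have tT: "\<And>i. i \<in> {1..n} \<Longrightarrow> t i \<in> Tr i" using t(1) by (auto simp: PiE_iff)
  have "emeasure H (Cyl n c) = emeasure Om (Zmap -` Cyl n c \<inter> space Om)"
    unfolding H_def by (rule emeasure_distr[OF Zmap_meas Cyl_sets[OF n]])
  also have "\<dots> = emeasure Om (prod_emb UNIV ?M {1..n} (Pi\<^sub>E {1..n} (\<lambda>i. {t i})))" using eq by simp
  also have "\<dots> = (\<Prod>i\<in>{1..n}. emeasure (?M i) {t i})" unfolding Om_def
    by (rule emeasure_PiM_emb) (auto simp: prob_space_uniform_count_measure Tr_fin Tr_ne tT)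
  also have "\<dots> = (\<Prod>i\<in>{1..n}. ennreal (1 / real (card (Tr i))))"
    by (rule prod.cong) (auto simp: emeasure_uniform_count_measure Tr_fin tT)
  also have "\<dots> = ennreal (kap n)" unfolding kap_def by (rule prod_ennreal) simp
  finally show ?thesis .
qed

lemma kap_Suc: "kap (Suc n) = kap n * (1 / real (card (Tr (Suc n))))"
  unfolding kap_def by (simp add: atLeastAtMostSuc_conv mult.commute)

lemma kap_nonneg: "kap n \<ge> 0" unfolding kap_def by (simp add: prod_nonneg)

lemma kap_bound: "kap (Suc n) \<le> (1/2) ^ n"
proof (induction n)
  case 0
  have "card (Tr 1) \<ge> 1" using Tr_fin Tr_ne by (simp add: Suc_le_eq card_gt_0_iff)
  then show ?case unfolding kap_def by simp
next
  case (Suc n)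
  have "card (Tr (Suc (Suc n))) \<ge> 2" using Tr_card by simp
  then have "1 / real (card (Tr (Suc (Suc n)))) \<le> 1 / 2" by (simp add: field_simps)
  then have "kap (Suc n) * (1 / real (card (Tr (Suc (Suc n))))) \<le> (1/2) ^ n * (1/2)"
    using Suc.IH kap_nonneg by (intro mult_mono) auto
  then show ?case using kap_Suc[of "Suc n"] by simp
qed

lemma kap_small: "0 < \<epsilon> \<Longrightarrow> \<exists>n\<ge>1. kap n < \<epsilon>"
proof -
  assume e: "0 < \<epsilon>"
  obtain m where "(1/2 :: real) ^ m < \<epsilon>" using real_arch_pow_inv[OF e, of "1/2"] by auto
  then have "kap (Suc m) < \<epsilon>" using kap_bound[of m] by simp
  then show ?thesis by (intro exI[of _ "Suc m"]) simp
qed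

lemma measure_H_Cyl: "n \<ge> 1 \<Longrightarrow> c \<in> rcosets\<^bsub>G\<^esub> (N n) \<Longrightarrow> measure H (Cyl n c) = kap n"
  using H_Cyl kap_nonneg by (simp add: measure_def)

lemma H_single: "z \<in> Zs \<Longrightarrow> emeasure H {z} = 0"
proof -
  assume z: "z \<in> Zs"
  interpret P: prob_space H by (rule prob_H)
  have le: "measure H {z} \<le> kap n" if n: "n \<ge> 1" for n
  proof -
    have "{z} \<subseteq> Cyl n (z n)" using z unfolding Cyl_def by auto
    moreover have "Cyl n (z n) \<in> sets H" using Cyl_sets[OF n] sets_H by simp
    ultimately have "measure H {z} \<le> measure H (Cyl n (z n))" by (rule P.finite_measure_mono)
    also have "\<dots> = kap n" using measure_H_Cyl[OF n Zs_coset[OF z n]] .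
    finally show ?thesis .
  qed
  have "measure H {z} = 0"
  proof (rule ccontr)
    assume "measure H {z} \<noteq> 0"
    then have "measure H {z} > 0" using measure_nonneg[of H "{z}"] by (simp add: less_le)
    then obtain n where "n \<ge> 1" "kap n < measure H {z}" using kap_small by blast
    then show False using le by fastforce
  qed
  then show ?thesis using P.emeasure_eq_measure by simp
qed

lemma H_null: "countable C \<Longrightarrow> C \<subseteq> Zs \<Longrightarrow> C \<in> null_sets H"
proof -
  assume C: "countable C" "C \<subseteq> Zs"
  have "C = (\<Union>z\<in>C. {z})" by auto
  moreover have "(\<Union>z\<in>C. {z}) \<in> null_sets H"
  proof (rule null_sets_UN'[OF C(1)])
    fix z assume "z \<in> C"
    then have z: "z \<in> Zs" using C(2) by auto
    show "{z} \<in> null_sets H" using H_single[OF z] single_Zm[OF z] sets_H by (simp add: null_sets_def)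
  qed
  ultimately show ?thesis by simp
qed



section \<open>Invariance of H\<close>

lemma Ys_ne: "a_inf \<in> Ys" using x0X unfolding x0_def Xset_def by auto
lemma eZ_Zs: "eZ N \<in> Zs" using x0X unfolding x0_def Xset_def by auto

lemma actZ_Zs: "w \<in> carrier G \<Longrightarrow> z \<in> Zs \<Longrightarrow> actZ r w z \<in> Zs"
proof -
  assume w: "w \<in> carrier G" and z: "z \<in> Zs"
  have "(a_inf, z) \<in> Xset r N" using Ys_ne z unfolding Xset_def by simp
  from actX_X[OF w this] show ?thesis unfolding actX_def Xset_def by auto
qed

lemma actY_Ys: "w \<in> carrier G \<Longrightarrow> y \<in> Ys \<Longrightarrow> actY w y \<in> Ys"
proof -
  assume w: "w \<in> carrier G" and y: "y \<in> Ys"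
  have "(y, eZ N) \<in> Xset r N" using eZ_Zs y unfolding Xset_def by simp
  from actX_X[OF w this] show ?thesis unfolding actX_def Xset_def by auto
qed

lemma lcos_cancel: "w \<in> carrier G \<Longrightarrow> A \<subseteq> carrier G \<Longrightarrow> inv\<^bsub>G\<^esub> w <#\<^bsub>G\<^esub> (w <#\<^bsub>G\<^esub> A) = A"
  by (simp add: Gr.lcos_m_assoc Gr.lcos_mult_one)

lemma lcos_cancel2: "w \<in> carrier G \<Longrightarrow> A \<subseteq> carrier G \<Longrightarrow> w <#\<^bsub>G\<^esub> (inv\<^bsub>G\<^esub> w <#\<^bsub>G\<^esub> A) = A"
  by (simp add: Gr.lcos_m_assoc Gr.lcos_mult_one)

lemma lcos_rcosets: "w \<in> carrier G \<Longrightarrow> n \<ge> 1 \<Longrightarrow> c \<in> rcosets\<^bsub>G\<^esub> (N n) \<Longrightarrow> w <#\<^bsub>G\<^esub> c \<in> rcosets\<^bsub>G\<^esub> (N n)"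
proof -
  assume w: "w \<in> carrier G" and n: "n \<ge> 1" and c: "c \<in> rcosets\<^bsub>G\<^esub> (N n)"
  obtain g where g: "g \<in> carrier G" "c = N n #>\<^bsub>G\<^esub> g" using c unfolding RCOSETS_def by auto
  have Nc: "N n \<subseteq> carrier G" using subgroup.subset[OF subgroupN[OF n]] .
  have "w <#\<^bsub>G\<^esub> c = (w <#\<^bsub>G\<^esub> N n) #>\<^bsub>G\<^esub> g" using Gr.coset_assoc[OF w g(1) Nc] g(2) by simp
  also have "w <#\<^bsub>G\<^esub> N n = N n #>\<^bsub>G\<^esub> w" using normal.coset_eq[OF normalN[OF n]] w by simp
  also have "(N n #>\<^bsub>G\<^esub> w) #>\<^bsub>G\<^esub> g = N n #>\<^bsub>G\<^esub> (w \<otimes>\<^bsub>G\<^esub> g)" using Gr.coset_mult_assoc[OF Nc w g(1)] .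
  finally show ?thesis using Gr.rcosetsI[OF Nc] w g(1) by simp
qed

lemma actZ_pre: "w \<in> carrier G \<Longrightarrow> n \<ge> 1 \<Longrightarrow> c \<subseteq> carrier G \<Longrightarrow>
   actZ r w -` Cyl n c \<inter> Zs = Cyl n (inv\<^bsub>G\<^esub> w <#\<^bsub>G\<^esub> c)"
proof -
  assume w: "w \<in> carrier G" and n: "n \<ge> 1" and c: "c \<subseteq> carrier G"
  have iw: "inv\<^bsub>G\<^esub> w \<in> carrier G" using w by simp
  have "z \<in> actZ r w -` Cyl n c \<longleftrightarrow> z \<in> Cyl n (inv\<^bsub>G\<^esub> w <#\<^bsub>G\<^esub> c)" if z: "z \<in> Zs" for z
  proof -
    have zc: "z n \<subseteq> carrier G" using coset_sub[OF n Zs_coset[OF z n]] .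
    have "z \<in> actZ r w -` Cyl n c \<longleftrightarrow> w <#\<^bsub>G\<^esub> z n = c"
      unfolding Cyl_def using actZ_Zs[OF w z] n by (simp add: actZ_def)
    also have "\<dots> \<longleftrightarrow> z n = inv\<^bsub>G\<^esub> w <#\<^bsub>G\<^esub> c"
    proof
      assume "w <#\<^bsub>G\<^esub> z n = c"
      then show "z n = inv\<^bsub>G\<^esub> w <#\<^bsub>G\<^esub> c" using lcos_cancel[OF w zc] by simp
    next
      assume "z n = inv\<^bsub>G\<^esub> w <#\<^bsub>G\<^esub> c"
      then show "w <#\<^bsub>G\<^esub> z n = c" using lcos_cancel2[OF w c] by simp
    qed
    finally show ?thesis unfolding Cyl_def using z by simp
  qed
  then show ?thesis using Cyl_sub by blast
qed

lemma actZ_meas: "w \<in> carrier G \<Longrightarrow> actZ r w \<in> measurable Zm Zm"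
proof (rule measurable_sigma_sets[OF sets_Zm ZE_Pow])
  assume w: "w \<in> carrier G"
  show "actZ r w \<in> space Zm \<rightarrow> Zs" using actZ_Zs[OF w] space_Zm by auto
  fix A assume A: "A \<in> ZE"
  show "actZ r w -` A \<inter> space Zm \<in> sets Zm"
  proof (cases "A = {} \<or> A = Zs")
    case True
    then show ?thesis
    proof
      assume "A = {}" then show ?thesis by simp
    next
      assume "A = Zs" then have "actZ r w -` A \<inter> space Zm = space Zm" using actZ_Zs[OF w] space_Zm by auto
      then show ?thesis by simp
    qed
  next
    case False
    then obtain n c where nc: "n \<ge> 1" "c \<in> rcosets\<^bsub>G\<^esub> (N n)" "A = Cyl n c" using ZE_cases[OF A] by blast
    have "actZ r w -` A \<inter> space Zm = Cyl n (inv\<^bsub>G\<^esub> w <#\<^bsub>G\<^esub> c)"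
      using actZ_pre[OF w nc(1) coset_sub[OF nc(1,2)]] nc(3) space_Zm by simp
    then show ?thesis using Cyl_sets[OF nc(1)] by simp
  qed
qed

lemma actZ_measH: "w \<in> carrier G \<Longrightarrow> actZ r w \<in> measurable H Zm"
  using actZ_meas measurable_cong_sets[OF sets_H refl] by blast

lemma H_inv: "w \<in> carrier G \<Longrightarrow> distr H Zm (actZ r w) = H"
proof -
  assume w: "w \<in> carrier G"
  interpret P: prob_space H by (rule prob_H)
  have em: "emeasure (distr H Zm (actZ r w)) X = emeasure H X" if X: "X \<in> ZE" for X
  proof -
    have XS: "X \<in> sets Zm" using X sets_Zm by auto
    have "emeasure (distr H Zm (actZ r w)) X = emeasure H (actZ r w -` X \<inter> Zs)"
      using emeasure_distr[OF actZ_measH[OF w] XS] space_H by simp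
    also have "\<dots> = emeasure H X"
    proof (cases "X = {} \<or> X = Zs")
      case True
      then show ?thesis
      proof
        assume "X = {}" then show ?thesis by simp
      next
        assume "X = Zs" then have "actZ r w -` X \<inter> Zs = X" using actZ_Zs[OF w] by auto
        then show ?thesis by simp
      qed
    next
      case False
      then obtain n c where nc: "n \<ge> 1" "c \<in> rcosets\<^bsub>G\<^esub> (N n)" "X = Cyl n c" using ZE_cases[OF X] by blast
      have iw: "inv\<^bsub>G\<^esub> w \<in> carrier G" using w by simp
      have "actZ r w -` X \<inter> Zs = Cyl n (inv\<^bsub>G\<^esub> w <#\<^bsub>G\<^esub> c)"
        using actZ_pre[OF w nc(1) coset_sub[OF nc(1,2)]] nc(3) by simp
      then show ?thesis using H_Cyl[OF nc(1) lcos_rcosets[OF iw nc(1,2)]] H_Cyl[OF nc(1,2)] nc(3) by simp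
    qed
    finally show ?thesis .
  qed
  show ?thesis
  proof (rule measure_eqI_generator_eq_countable[OF ZE_Int_stable ZE_Pow em])
    show "sets (distr H Zm (actZ r w)) = sigma_sets Zs ZE" using sets_Zm by simp
    show "sets H = sigma_sets Zs ZE" using sets_Zm sets_H by simp
    show "{Zs} \<subseteq> ZE" unfolding ZE_def by simp
    show "\<Union> {Zs} = Zs" by simp
    show "countable {Zs}" by simp
    fix a assume "a \<in> {Zs}"
    then have "a = Zs" by simp
    then show "emeasure (distr H Zm (actZ r w)) a \<noteq> \<infinity>" using em[of Zs] P.emeasure_space_1 space_H
      unfolding ZE_def by simp
  qed
qed

section \<open>The RIM\<close>

definition Bad :: "(nat \<Rightarrow> letter) \<Rightarrow> (nat \<Rightarrow> word set) set" where "Bad y = {z \<in> Zs. (y, z) \<in> Orb}"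

lemma Bad_countable: "countable (Bad y)"
proof -
  have "Bad y \<subseteq> (\<lambda>g. snd (actX r g (x0 N))) ` carrier G"
  proof
    fix z assume "z \<in> Bad y"
    then obtain g where g: "g \<in> carrier G" "(y, z) = actX r g (x0 N)" unfolding Bad_def Orb_def by auto
    have "z = snd (actX r g (x0 N))" using g(2) by (metis snd_conv)
    then show "z \<in> (\<lambda>g. snd (actX r g (x0 N))) ` carrier G" using g(1) by blast
  qed
  moreover have "countable ((\<lambda>g. snd (actX r g (x0 N))) ` carrier G)" by (intro countable_image countableI_type)
  ultimately show ?thesis using countable_subset by blast
qed

lemma Bad_null: "Bad y \<in> null_sets H"
  using H_null[OF Bad_countable] unfolding Bad_def by auto

definition sy :: "(nat \<Rightarrow> letter) \<Rightarrow> (nat \<Rightarrow> word set) \<Rightarrow> 'x" where "sy y z = sec (y, z)"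
definition mu :: "(nat \<Rightarrow> letter) \<Rightarrow> 'x measure" where "mu y = distr H borel (sy y)"

lemma sy_pi: "y \<in> Ys \<Longrightarrow> z \<in> Zs \<Longrightarrow> \<pi> (sy y z) = (y, z)"
  unfolding sy_def by (rule sec) (simp add: Xset_def)

lemma sy_cont_pt:
  assumes y: "y \<in> Ys" and z: "z \<in> Zs" "z \<notin> Bad y" and U: "open U" "sy y z \<in> U"
  shows "\<exists>k n. n \<ge> 1 \<and> (\<forall>y'\<in>Ys. \<forall>z'\<in>Zs. (\<forall>i<k. y' i = y i) \<longrightarrow> z' n = z n \<longrightarrow> sy y' z' \<in> U)"
proof -
  have p: "(y, z) \<in> Xset r N" "(y, z) \<notin> Orb" using y z unfolding Xset_def Bad_def by auto
  obtain W where W: "openin (topX r N) W" "(y, z) \<in> W" "\<forall>q. \<pi> q \<in> W \<longrightarrow> q \<in> U"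
    using closed_map_nbhd[OF p U(1)] U(2) unfolding sy_def by blast
  obtain k n where kn: "n \<ge> 1" "\<forall>y'\<in>Ys. \<forall>z'\<in>Zs. (\<forall>i<k. y' i = y i) \<longrightarrow> z' n = z n \<longrightarrow> (y', z') \<in> W"
    using X_nbhd[OF W(1,2)] by blast
  have "sy y' z' \<in> U" if "y' \<in> Ys" "z' \<in> Zs" "\<forall>i<k. y' i = y i" "z' n = z n" for y' z'
  proof -
    have "(y', z') \<in> W" using kn(2) that by blast
    then show ?thesis using W(3) sy_pi[OF that(1,2)] by simp
  qed
  then show ?thesis using kn(1) by blast
qed

lemma sy_meas: "y \<in> Ys \<Longrightarrow> sy y \<in> measurable H borel"
proof (rule borel_measurableI)
  fix U :: "'x set" assume y: "y \<in> Ys" and U: "open U"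
  let ?S = "sy y -` U \<inter> Zs"
  let ?C = "{C \<in> ZE. C \<subseteq> ?S}"
  have eq: "?S = \<Union> ?C \<union> (?S \<inter> Bad y)"
  proof
    show "\<Union> ?C \<union> (?S \<inter> Bad y) \<subseteq> ?S" by blast
    show "?S \<subseteq> \<Union> ?C \<union> (?S \<inter> Bad y)"
    proof
      fix z assume zS: "z \<in> ?S"
      show "z \<in> \<Union> ?C \<union> (?S \<inter> Bad y)"
      proof (cases "z \<in> Bad y")
        case True then show ?thesis using zS by blast
      next
        case False
        have zZ: "z \<in> Zs" "sy y z \<in> U" using zS by auto
        obtain k n where kn: "n \<ge> 1" "\<forall>y'\<in>Ys. \<forall>z'\<in>Zs. (\<forall>i<k. y' i = y i) \<longrightarrow> z' n = z n \<longrightarrow> sy y' z' \<in> U"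
          using sy_cont_pt[OF y zZ(1) False U zZ(2)] by blast
        have "Cyl n (z n) \<subseteq> ?S" using kn(2) y unfolding Cyl_def by auto
        moreover have "Cyl n (z n) \<in> ZE" using Cyl_ZE[OF kn(1) Zs_coset[OF zZ(1) kn(1)]] .
        moreover have "z \<in> Cyl n (z n)" using zZ(1) unfolding Cyl_def by simp
        ultimately show ?thesis by blast
      qed
    qed
  qed
  have a: "\<Union> ?C \<in> sets Zm"
  proof (rule sets.countable_Union)
    show "countable ?C" by (rule countable_subset[OF _ ZE_countable]) auto
    show "?C \<subseteq> sets Zm" using sets_Zm by auto
  qed
  have b: "?S \<inter> Bad y \<in> sets Zm"
    by (rule countable_Zm) (auto intro: countable_subset[OF _ Bad_countable])
  have "?S \<in> sets Zm" by (subst eq) (rule sets.Un[OF a b])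
  then show "sy y -` U \<inter> space H \<in> sets H" using space_H sets_H by simp
qed

lemma prob_mu: "y \<in> Ys \<Longrightarrow> prob_space (mu y)"
  unfolding mu_def by (rule prob_space.prob_space_distr[OF prob_H sy_meas])

lemma sets_mu: "sets (mu y) = sets borel" unfolding mu_def by simp

lemma mu_out: "y \<in> Ys \<Longrightarrow> emeasure (mu y) (- {q. fst (\<pi> q) = y}) = 0"
proof -
  assume y: "y \<in> Ys"
  have o: "- {q. fst (\<pi> q) = y} \<in> sets borel" using fiberY_closed[OF y] by (simp add: borel_open open_Compl)
  have "sy y -` (- {q. fst (\<pi> q) = y}) \<inter> space H = {}" using sy_pi[OF y] space_H by auto
  then show ?thesis unfolding mu_def using emeasure_distr[OF sy_meas[OF y] o] by simp
qed

lemma mu_supp: "y \<in> Ys \<Longrightarrow> msupp (mu y) \<subseteq> (fst \<circ> \<pi>) -` {y}"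
proof
  fix x assume y: "y \<in> Ys" and x: "x \<in> msupp (mu y)"
  show "x \<in> (fst \<circ> \<pi>) -` {y}"
  proof (rule ccontr)
    assume "x \<notin> (fst \<circ> \<pi>) -` {y}"
    then have "x \<in> - {q. fst (\<pi> q) = y}" by simp
    moreover have "open (- {q. fst (\<pi> q) = y})" using fiberY_closed[OF y] by (simp add: open_Compl)
    ultimately have "emeasure (mu y) (- {q. fst (\<pi> q) = y}) > 0" using x unfolding msupp_def by blast
    then show False using mu_out[OF y] by simp
  qed
qed

lemma mu_eqv: "w \<in> carrier G \<Longrightarrow> y \<in> Ys \<Longrightarrow> mu (actY w y) = distr (mu y) borel (\<phi> w)"
proof -
  assume w: "w \<in> carrier G" and y: "y \<in> Ys"
  let ?y' = "actY w y"
  have y': "?y' \<in> Ys" using actY_Ys[OF w y] .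
  have phim: "\<phi> w \<in> measurable borel borel" using borel_measurable_continuous_onI[OF phi_cont[OF w]] .
  have s'm: "sy ?y' \<in> measurable Zm borel" using sy_meas[OF y'] measurable_cong_sets[OF sets_H refl] by blast
  have "mu ?y' = distr (distr H Zm (actZ r w)) borel (sy ?y')" unfolding mu_def using H_inv[OF w] by simp
  also have "\<dots> = distr H borel (sy ?y' \<circ> actZ r w)" by (rule distr_distr[OF s'm actZ_measH[OF w]])
  also have "\<dots> = distr H borel (\<phi> w \<circ> sy y)"
  proof (rule distr_cong_AE)
    show "sy ?y' \<circ> actZ r w \<in> measurable H borel" using measurable_comp[OF actZ_measH[OF w] s'm] .
    show "\<phi> w \<circ> sy y \<in> measurable H borel" using measurable_comp[OF sy_meas[OF y] phim] .
    show "AE z in H. (sy ?y' \<circ> actZ r w) z = (\<phi> w \<circ> sy y) z"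
    proof (rule AE_I'[OF Bad_null[of y]])
      show "{z \<in> space H. \<not> (sy ?y' \<circ> actZ r w) z = (\<phi> w \<circ> sy y) z} \<subseteq> Bad y"
      proof
        fix z assume "z \<in> {z \<in> space H. \<not> (sy ?y' \<circ> actZ r w) z = (\<phi> w \<circ> sy y) z}"
        then have z: "z \<in> Zs" and ne: "sy ?y' (actZ r w z) \<noteq> \<phi> w (sy y z)" using space_H by auto
        show "z \<in> Bad y"
        proof (rule ccontr)
          assume nb: "z \<notin> Bad y"
          have yz: "(y, z) \<in> Xset r N" using y z unfolding Xset_def by simp
          have p: "actX r w (y, z) = (?y', actZ r w z)" unfolding actX_def by simp
          have pX: "(?y', actZ r w z) \<in> Xset r N" using actX_X[OF w yz] p by simp
          have pO: "(?y', actZ r w z) \<notin> Orb"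
          proof
            assume "(?y', actZ r w z) \<in> Orb"
            then have "(y, z) \<in> Orb" using Orb_back[OF w yz] p by simp
            then show False using nb z unfolding Bad_def by simp
          qed
          have "\<pi> (\<phi> w (sy y z)) = (?y', actZ r w z)" using pi_eqv[OF w] sy_pi[OF y z] p by simp
          then have "\<phi> w (sy y z) = sec (?y', actZ r w z)" using fib_unique[OF pX pO] by blast
          then show False using ne unfolding sy_def by simp
        qed
      qed
    qed
  qed simp_all
  also have "\<dots> = distr (distr H borel (sy y)) borel (\<phi> w)" by (rule distr_distr[OF phim sy_meas[OF y], symmetric])
  finally show ?thesis unfolding mu_def .
qed



lemma g_bound: "continuous_on UNIV (g :: 'x \<Rightarrow> real) \<Longrightarrow> \<exists>B. \<forall>x. norm (g x) \<le> B"
proof -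
  assume g: "continuous_on UNIV g"
  have "compact (g ` UNIV)" by (rule compact_continuous_image[OF g compactU])
  then have "bounded (g ` UNIV)" by (rule compact_imp_bounded)
  then show ?thesis unfolding bounded_iff by blast
qed

lemma mu_int: "y \<in> Ys \<Longrightarrow> continuous_on UNIV (g :: 'x \<Rightarrow> real) \<Longrightarrow> integral\<^sup>L (mu y) g = integral\<^sup>L H (\<lambda>z. g (sy y z))"
  unfolding mu_def by (rule integral_distr[OF sy_meas borel_measurable_continuous_onI])

lemma mu_seq:
  assumes g: "continuous_on UNIV (g :: 'x \<Rightarrow> real)" and y0: "y0 \<in> Ys"
    and Y: "\<And>k. Y k \<in> Ys" "\<And>k i. i < k \<Longrightarrow> Y k i = y0 i"
  shows "(\<lambda>k. integral\<^sup>L H (\<lambda>z. g (sy (Y k) z))) \<longlonglongrightarrow> integral\<^sup>L H (\<lambda>z. g (sy y0 z))"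
proof -
  interpret P: prob_space H by (rule prob_H)
  obtain B where B: "\<forall>x. norm (g x) \<le> B" using g_bound[OF g] by blast
  have gm: "g \<in> borel_measurable borel" by (rule borel_measurable_continuous_onI[OF g])
  show ?thesis
  proof (rule integral_dominated_convergence[where w = "\<lambda>_. B"])
    show "(\<lambda>z. g (sy y0 z)) \<in> borel_measurable H" using measurable_comp[OF sy_meas[OF y0] gm] by (simp add: o_def)
    show "(\<lambda>z. g (sy (Y k) z)) \<in> borel_measurable H" for k using measurable_comp[OF sy_meas[OF Y(1)] gm] by (simp add: o_def)
    show "integrable H (\<lambda>_. B)" by (rule P.integrable_const)
    show "AE z in H. norm (g (sy (Y k) z)) \<le> B" for k using B by simp
    show "AE z in H. (\<lambda>k. g (sy (Y k) z)) \<longlonglongrightarrow> g (sy y0 z)"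
    proof (rule AE_I'[OF Bad_null[of y0]])
      show "{z \<in> space H. \<not> (\<lambda>k. g (sy (Y k) z)) \<longlonglongrightarrow> g (sy y0 z)} \<subseteq> Bad y0"
      proof
        fix z assume "z \<in> {z \<in> space H. \<not> (\<lambda>k. g (sy (Y k) z)) \<longlonglongrightarrow> g (sy y0 z)}"
        then have z: "z \<in> Zs" and nc: "\<not> (\<lambda>k. g (sy (Y k) z)) \<longlonglongrightarrow> g (sy y0 z)" using space_H by auto
        show "z \<in> Bad y0"
        proof (rule ccontr)
          assume nb: "z \<notin> Bad y0"
          have "(\<lambda>k. g (sy (Y k) z)) \<longlonglongrightarrow> g (sy y0 z)"
          proof (rule topological_tendstoI)
            fix S :: "real set" assume S: "open S" "g (sy y0 z) \<in> S"
            have "open (g -` S \<inter> UNIV)" using g S(1) continuous_on_open_vimage[OF open_UNIV] by blast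
            then have U: "open (g -` S)" by simp
            have s0: "sy y0 z \<in> g -` S" using S(2) by simp
            obtain k n where kn: "n \<ge> 1" "\<forall>y'\<in>Ys. \<forall>z'\<in>Zs. (\<forall>i<k. y' i = y0 i) \<longrightarrow> z' n = z n \<longrightarrow> sy y' z' \<in> g -` S"
              using sy_cont_pt[OF y0 z nb U s0] by blast
            have "\<forall>j\<ge>k. g (sy (Y j) z) \<in> S"
            proof (intro allI impI)
              fix j assume j: "j \<ge> k"
              have "\<forall>i<k. Y j i = y0 i" using Y(2) j by simp
              then show "g (sy (Y j) z) \<in> S" using kn(2) Y(1) z by blast
            qed
            then show "eventually (\<lambda>j. g (sy (Y j) z) \<in> S) sequentially" unfolding eventually_sequentially by blast
          qed
          then show False using nc by simp
        qed
      qed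
    qed
  qed
qed

lemma I_cont: "continuous_on UNIV (g :: 'x \<Rightarrow> real) \<Longrightarrow> continuous_map (topY r) euclideanreal (\<lambda>y. integral\<^sup>L (mu y) g)"
proof -
  assume g: "continuous_on UNIV g"
  let ?I = "\<lambda>y. integral\<^sup>L (mu y) g"
  have loc: "\<exists>k. \<forall>y\<in>Ys. (\<forall>i<k. y i = y0 i) \<longrightarrow> dist (?I y) (?I y0) < e" if y0: "y0 \<in> Ys" and e: "e > 0" for y0 e
  proof (rule ccontr)
    assume "\<not> ?thesis"
    then have "\<forall>k. \<exists>y. y \<in> Ys \<and> (\<forall>i<k. y i = y0 i) \<and> \<not> dist (?I y) (?I y0) < e" by blast
    then obtain Y where YY: "\<forall>k. Y k \<in> Ys \<and> (\<forall>i<k. Y k i = y0 i) \<and> \<not> dist (?I (Y k)) (?I y0) < e"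
      using choice[of "\<lambda>k y. y \<in> Ys \<and> (\<forall>i<k. y i = y0 i) \<and> \<not> dist (?I y) (?I y0) < e"] by blast
    have Y: "\<And>k. Y k \<in> Ys" "\<And>k. \<forall>i<k. Y k i = y0 i" "\<And>k. \<not> dist (?I (Y k)) (?I y0) < e"
      using YY by auto
    have "(\<lambda>k. integral\<^sup>L H (\<lambda>z. g (sy (Y k) z))) \<longlonglongrightarrow> integral\<^sup>L H (\<lambda>z. g (sy y0 z))"
    proof -
      have Y2: "\<And>k i. i < k \<Longrightarrow> Y k i = y0 i" using Y(2) by blast
      show ?thesis by (rule mu_seq[OF g y0 Y(1) Y2])
    qed
    then have "(\<lambda>k. ?I (Y k)) \<longlonglongrightarrow> ?I y0" using mu_int[OF Y(1) g] mu_int[OF y0 g] by simp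
    then have "eventually (\<lambda>k. dist (?I (Y k)) (?I y0) < e) sequentially" using tendstoD e by blast
    then obtain k where "dist (?I (Y k)) (?I y0) < e" unfolding eventually_sequentially by blast
    then show False using Y(3) by blast
  qed
  show ?thesis unfolding continuous_map
  proof (intro conjI allI impI)
    show "?I ` topspace (topY r) \<subseteq> topspace euclideanreal" by simp
    fix S :: "real set" assume So: "openin euclideanreal S"
    have S: "open S" using open_openin[of S] So by blast
    show "openin (topY r) {y \<in> topspace (topY r). ?I y \<in> S}"
    proof (subst openin_subopen, intro ballI)
      fix y0 assume "y0 \<in> {y \<in> topspace (topY r). ?I y \<in> S}"
      then have y0: "y0 \<in> Ys" "?I y0 \<in> S" using topspace_topY by auto
      obtain e where e: "e > 0" "ball (?I y0) e \<subseteq> S" using S y0(2) open_contains_ball by blast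
      obtain k where k: "\<forall>y\<in>Ys. (\<forall>i<k. y i = y0 i) \<longrightarrow> dist (?I y) (?I y0) < e" using loc[OF y0(1) e(1)] by blast
      let ?T = "{y \<in> Ys. \<forall>i<k. y i = y0 i}"
      have "openin (topY r) ?T" by (rule cylY_open[OF y0(1)])
      moreover have "y0 \<in> ?T" using y0 by simp
      moreover have "?T \<subseteq> {y \<in> topspace (topY r). ?I y \<in> S}"
      proof
        fix y assume y: "y \<in> ?T"
        then have "dist (?I y) (?I y0) < e" using k by blast
        then have "?I y \<in> ball (?I y0) e" by (simp add: dist_commute)
        then show "y \<in> {y \<in> topspace (topY r). ?I y \<in> S}" using e(2) y topspace_topY by auto
      qed
      ultimately show "\<exists>T. openin (topY r) T \<and> y0 \<in> T \<and> T \<subseteq> {y \<in> topspace (topY r). ?I y \<in> S}" by blast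
    qed
  qed
qed

lemma mu_RIM: "is_RIM r \<phi> (fst \<circ> \<pi>) mu"
  unfolding is_RIM_def
proof (intro conjI ballI allI impI)
  fix y assume "y \<in> Ys"
  then show "sets (mu y) = sets borel" "prob_space (mu y)" using sets_mu prob_mu by auto
next
  fix g :: "'x \<Rightarrow> real" assume "continuous_on UNIV g"
  then show "continuous_map (topY r) euclideanreal (\<lambda>y. integral\<^sup>L (mu y) g)" by (rule I_cont)
next
  fix w y assume "w \<in> FG_carrier r" "y \<in> Ys"
  then show "mu (actY w y) = distr (mu y) borel (\<phi> w)" using mu_eqv carrierG by simp
next
  fix y assume "y \<in> Ys"
  then show "msupp (mu y) \<subseteq> (fst \<circ> \<pi>) -` {y}" by (rule mu_supp)
qed

end

lemma linv_linv: "linv (linv a) = a" by (cases a) (simp add: linv_def)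

lemma reduced_Nil: "reduced []" unfolding reduced_def by simp
lemma reduced_single: "reduced [a]" unfolding reduced_def by simp

lemma reduced_Cons: "reduced (a # xs) \<longleftrightarrow> reduced xs \<and> (xs \<noteq> [] \<longrightarrow> hd xs \<noteq> linv a)"
proof
  assume R: "reduced (a # xs)"
  have "reduced xs" unfolding reduced_def
  proof (intro allI impI)
    fix i assume "Suc i < length xs"
    then have "Suc (Suc i) < length (a # xs)" by simp
    then have "(a # xs) ! Suc (Suc i) \<noteq> linv ((a # xs) ! Suc i)" using R unfolding reduced_def by blast
    then show "xs ! Suc i \<noteq> linv (xs ! i)" by simp
  qed
  moreover have "hd xs \<noteq> linv a" if "xs \<noteq> []"
  proof -
    have "Suc 0 < length (a # xs)" using that by simp
    then have "(a # xs) ! Suc 0 \<noteq> linv ((a # xs) ! 0)" using R unfolding reduced_def by blast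
    then show ?thesis using that by (simp add: hd_conv_nth)
  qed
  ultimately show "reduced xs \<and> (xs \<noteq> [] \<longrightarrow> hd xs \<noteq> linv a)" by blast
next
  assume R: "reduced xs \<and> (xs \<noteq> [] \<longrightarrow> hd xs \<noteq> linv a)"
  show "reduced (a # xs)" unfolding reduced_def
  proof (intro allI impI)
    fix i assume i: "Suc i < length (a # xs)"
    show "(a # xs) ! Suc i \<noteq> linv ((a # xs) ! i)"
    proof (cases i)
      case 0
      then have "xs \<noteq> []" using i by auto
      then show ?thesis using R 0 by (simp add: hd_conv_nth)
    next
      case (Suc j)
      then have "Suc j < length xs" using i by simp
      then show ?thesis using R Suc unfolding reduced_def by simp
    qed
  qed
qed

lemma reduced_append: "reduced u \<Longrightarrow> reduced v \<Longrightarrow> (u \<noteq> [] \<Longrightarrow> v \<noteq> [] \<Longrightarrow> hd v \<noteq> linv (last u)) \<Longrightarrow> reduced (u @ v)"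
proof (induction u)
  case Nil then show ?case by simp
next
  case (Cons a u)
  have ru: "reduced u" using Cons.prems(1) reduced_Cons by blast
  have "reduced (u @ v)"
  proof (rule Cons.IH[OF ru Cons.prems(2)])
    assume "u \<noteq> []" "v \<noteq> []"
    then show "hd v \<noteq> linv (last u)" using Cons.prems(3) by simp
  qed
  moreover have "hd (u @ v) \<noteq> linv a" if "u @ v \<noteq> []"
  proof (cases "u = []")
    case True
    then have "v \<noteq> []" using that by simp
    then show ?thesis using Cons.prems(3) True by simp
  next
    case False
    then show ?thesis using Cons.prems(1) reduced_Cons by simp
  qed
  ultimately show ?case using reduced_Cons by simp
qed

lemma fg_mult_app: "reduced (v @ w) \<Longrightarrow> fg_mult v w = v @ w"
proof (induction v)
  case Nil then show ?case by (simp add: fg_mult_def)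
next
  case (Cons a v)
  have r: "reduced (v @ w)" and h: "v @ w \<noteq> [] \<longrightarrow> hd (v @ w) \<noteq> linv a"
    using Cons.prems reduced_Cons[of a "v @ w"] by auto
  have "fg_mult (a # v) w = cons_red a (fg_mult v w)" by (simp add: fg_mult_def)
  also have "\<dots> = cons_red a (v @ w)" using Cons.IH[OF r] by simp
  also have "\<dots> = a # v @ w"
  proof (cases "v @ w")
    case Nil then show ?thesis by simp
  next
    case (Cons c rest)
    then have "c \<noteq> linv a" using h by simp
    then show ?thesis using Cons by simp
  qed
  finally show ?case by simp
qed

definition app_inf :: "word \<Rightarrow> (nat \<Rightarrow> letter) \<Rightarrow> (nat \<Rightarrow> letter)" where
  "app_inf w y = (\<lambda>i. if i < length w then w ! i else y (i - length w))"

lemma actY_app: "reduced w \<Longrightarrow> (w \<noteq> [] \<Longrightarrow> y 0 \<noteq> linv (last w)) \<Longrightarrow> actY w y = app_inf w y"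
proof (induction w)
  case Nil then show ?case by (simp add: actY_def app_inf_def)
next
  case (Cons a w)
  have rw: "reduced w" using Cons.prems(1) reduced_Cons by blast
  have IH: "actY w y = app_inf w y"
  proof (rule Cons.IH[OF rw])
    assume "w \<noteq> []" then show "y 0 \<noteq> linv (last w)" using Cons.prems(2) by simp
  qed
  have ne: "app_inf w y 0 \<noteq> linv a"
  proof (cases "w = []")
    case True then show ?thesis using Cons.prems(2) by (simp add: app_inf_def)
  next
    case False
    then have "hd w \<noteq> linv a" using Cons.prems(1) reduced_Cons by simp
    then show ?thesis using False by (simp add: app_inf_def hd_conv_nth)
  qed
  have "actY (a # w) y = cons_inf a (actY w y)" by (simp add: actY_def)
  also have "\<dots> = (\<lambda>n. if n = 0 then a else app_inf w y (n - 1))" using IH ne by (simp add: cons_inf_def)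
  also have "\<dots> = app_inf (a # w) y"
  proof
    fix n show "(if n = 0 then a else app_inf w y (n - 1)) = app_inf (a # w) y n"
      by (cases n) (simp_all add: app_inf_def)
  qed
  finally show ?case .
qed

lemma pick_letter: "\<exists>t\<in>{(0::nat,False),(0,True),(1,False),(1,True)}. t \<noteq> e1 \<and> t \<noteq> e2 \<and> t \<noteq> e3"
proof (rule ccontr)
  assume "\<not> ?thesis"
  then have sub: "{(0::nat,False),(0,True),(1,False),(1,True)} \<subseteq> {e1, e2, e3}" by blast
  have "card {(0::nat,False),(0,True),(1,False),(1,True)} \<le> card {e1, e2, e3}" by (rule card_mono[OF _ sub]) simp
  moreover have "card {(0::nat,False),(0,True),(1,False),(1,True)} = 4" by simp
  moreover have "card {e1, e2, e3} \<le> 3" by (simp add: card_insert_if)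
  ultimately show False by simp
qed

context setting begin


lemma pow_struct:
  assumes x: "x \<in> carrier G" "reduced x" "x \<noteq> []" "hd x \<noteq> linv (last x)"
  shows "reduced (x [^]\<^bsub>G\<^esub> m) \<and> (m \<ge> 1 \<longrightarrow> x [^]\<^bsub>G\<^esub> m \<noteq> [] \<and> hd (x [^]\<^bsub>G\<^esub> m) = hd x \<and> last (x [^]\<^bsub>G\<^esub> m) = last x)
     \<and> x [^]\<^bsub>G\<^esub> Suc m = x @ x [^]\<^bsub>G\<^esub> m"
proof (induction m)
  case 0
  have p0: "x [^]\<^bsub>G\<^esub> (0::nat) = []" using oneG by simp
  have "x [^]\<^bsub>G\<^esub> Suc 0 = x \<otimes>\<^bsub>G\<^esub> x [^]\<^bsub>G\<^esub> (0::nat)" using Gr.nat_pow_Suc2[OF x(1)] by blast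
  also have "\<dots> = fg_mult x []" using p0 multG by simp
  also have "\<dots> = x @ []" using fg_mult_app[of x "[]"] x(2) by simp
  finally show ?case using p0 reduced_Nil by simp
next
  case (Suc m)
  let ?p = "x [^]\<^bsub>G\<^esub> m"
  have rp: "reduced ?p" and hp: "m \<ge> 1 \<longrightarrow> ?p \<noteq> [] \<and> hd ?p = hd x \<and> last ?p = last x"
    and sp: "x [^]\<^bsub>G\<^esub> Suc m = x @ ?p" using Suc.IH by blast+
  have p0: "m = 0 \<Longrightarrow> ?p = []" using oneG by simp
  have cond: "?p \<noteq> [] \<Longrightarrow> hd ?p \<noteq> linv (last x)"
  proof -
    assume "?p \<noteq> []"
    then have "m \<ge> 1" using p0 by (cases m) auto
    then show ?thesis using hp x(4) by simp
  qed
  have r1: "reduced (x @ ?p)" using reduced_append[OF x(2) rp] cond by blast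
  have q: "x [^]\<^bsub>G\<^esub> Suc m \<noteq> [] \<and> hd (x [^]\<^bsub>G\<^esub> Suc m) = hd x \<and> last (x [^]\<^bsub>G\<^esub> Suc m) = last x"
  proof -
    have "last (x @ ?p) = last x"
    proof (cases "?p = []")
      case True then show ?thesis by simp
    next
      case False
      then have "m \<ge> 1" using p0 by (cases m) auto
      then show ?thesis using hp False by simp
    qed
    then show ?thesis using sp x(3) by simp
  qed
  have "x [^]\<^bsub>G\<^esub> Suc (Suc m) = x \<otimes>\<^bsub>G\<^esub> x [^]\<^bsub>G\<^esub> Suc m" using Gr.nat_pow_Suc2[OF x(1)] by blast
  also have "\<dots> = fg_mult x (x [^]\<^bsub>G\<^esub> Suc m)" using multG by simp
  also have "\<dots> = x @ x [^]\<^bsub>G\<^esub> Suc m"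
  proof (rule fg_mult_app)
    show "reduced (x @ x [^]\<^bsub>G\<^esub> Suc m)"
      using reduced_append[OF x(2)] r1 sp q x(4) by simp
  qed
  finally show ?case using r1 sp q by simp
qed

lemma pow_in_N:
  assumes n: "n \<ge> 1" and x: "x \<in> carrier G"
  shows "x [^]\<^bsub>G\<^esub> order (G Mod N n) \<in> N n" "order (G Mod N n) \<ge> 1"
proof -
  interpret Q: group "G Mod N n" using normal.factorgroup_is_group[OF normalN[OF n]] .
  have xc: "N n #>\<^bsub>G\<^esub> x \<in> carrier (G Mod N n)" unfolding FactGroup_def
    using Gr.rcosetsI[OF subgroup.subset[OF subgroupN[OF n]] x] by simp
  have "(N n #>\<^bsub>G\<^esub> x) [^]\<^bsub>G Mod N n\<^esub> order (G Mod N n) = \<one>\<^bsub>G Mod N n\<^esub>" by (rule Q.pow_order_eq_1[OF xc])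
  then have "N n #>\<^bsub>G\<^esub> (x [^]\<^bsub>G\<^esub> order (G Mod N n)) = N n"
    using normal.FactGroup_pow[OF normalN[OF n] x] by simp
  then show "x [^]\<^bsub>G\<^esub> order (G Mod N n) \<in> N n"
    using Gr.coset_join1[OF _ Gr.nat_pow_closed[OF x] subgroupN[OF n]] by blast
  have "carrier (G Mod N n) \<noteq> {}" using xc by blast
  moreover have "finite (carrier (G Mod N n))" unfolding FactGroup_def using finN[OF n] by simp
  ultimately show "order (G Mod N n) \<ge> 1" unfolding order_def by (simp add: Suc_le_eq card_gt_0_iff)
qed

lemma dens: "n \<ge> 1 \<Longrightarrow> y0 \<in> Ys \<Longrightarrow> y \<in> Ys \<Longrightarrow> \<exists>h\<in>N n. \<forall>i<k. actY h y i = y0 i"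
proof -
  assume n: "n \<ge> 1" and y0: "y0 \<in> Ys" and y: "y \<in> Ys"
  show ?thesis
  proof (cases "k = 0")
    case True
    have "[] \<in> N n" using subgroup.one_closed[OF subgroupN[OF n]] oneG by simp
    then show ?thesis using True by blast
  next
    case False
    define w0 where "w0 = map y0 [0..<k]"
    have w0: "w0 \<noteq> []" "length w0 = k" "\<And>i. i < k \<Longrightarrow> w0 ! i = y0 i" "hd w0 = y0 0"
      using False unfolding w0_def by (auto simp: hd_map)
    have y0Y: "\<forall>m. fst (y0 m) < r" "\<forall>m. y0 (Suc m) \<noteq> linv (y0 m)" using y0 unfolding Yset_def by auto
    have rw0: "reduced w0" unfolding reduced_def
    proof (intro allI impI)
      fix i assume "Suc i < length w0"
      then show "w0 ! Suc i \<noteq> linv (w0 ! i)" using w0(2,3) y0Y(2) by simp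
    qed
    obtain t where t: "t \<in> {(0::nat,False),(0,True),(1,False),(1,True)}"
      "t \<noteq> linv (last w0)" "t \<noteq> linv (hd w0)" "t \<noteq> linv (y 0)"
      using pick_letter by blast
    define x where "x = w0 @ [t]"
    have rx: "reduced x" unfolding x_def
      by (rule reduced_append[OF rw0 reduced_single]) (use t(2) in simp)
    have xne: "x \<noteq> []" unfolding x_def by simp
    have hx: "hd x = hd w0" "last x = t" unfolding x_def using w0(1) by auto
    have cyc: "hd x \<noteq> linv (last x)"
    proof
      assume "hd x = linv (last x)"
      then have "linv (hd w0) = t" using hx linv_linv by metis
      then show False using t(3) by simp
    qed
    have ft: "fst t < r" using t(1) r2 by auto
    have "\<forall>l\<in>set x. fst l < r"
    proof
      fix l assume "l \<in> set x"
      then have "l \<in> set w0 \<or> l = t" unfolding x_def by auto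
      then show "fst l < r" using ft y0Y(1) unfolding w0_def by auto
    qed
    then have xc: "x \<in> carrier G" using rx unfolding carrierG FG_carrier_def by simp
    let ?M = "order (G Mod N n)"
    have hN: "x [^]\<^bsub>G\<^esub> ?M \<in> N n" and M1: "?M \<ge> 1" using pow_in_N[OF n xc] by auto
    obtain M' where M': "?M = Suc M'" using M1 by (cases ?M) auto
    let ?h = "x [^]\<^bsub>G\<^esub> ?M"
    have ps: "reduced ?h" "?h \<noteq> []" "last ?h = last x" using pow_struct[OF xc rx xne cyc, of ?M] M1 by auto
    have hdecomp: "?h = x @ x [^]\<^bsub>G\<^esub> M'" using pow_struct[OF xc rx xne cyc, of M'] M' by simp
    have "y 0 \<noteq> linv (last ?h)"
    proof
      assume "y 0 = linv (last ?h)"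
      then have "t = linv (y 0)" using ps(3) hx(2) linv_linv by metis
      then show False using t(4) by simp
    qed
    then have act: "actY ?h y = app_inf ?h y" using actY_app[OF ps(1)] by blast
    have "\<forall>i<k. actY ?h y i = y0 i"
    proof (intro allI impI)
      fix i assume i: "i < k"
      have lx: "length x = Suc k" unfolding x_def using w0(2) by simp
      have "actY ?h y i = ?h ! i" using act i lx hdecomp by (simp add: app_inf_def)
      also have "\<dots> = x ! i" using hdecomp i lx by (simp add: nth_append)
      also have "\<dots> = w0 ! i" unfolding x_def using i w0(2) by (simp add: nth_append)
      also have "\<dots> = y0 i" using w0(3) i by simp
      finally show "actY ?h y i = y0 i" .
    qed
    then show ?thesis using hN by blast
  qed
qed



definition Aset :: "nat \<Rightarrow> word set \<Rightarrow> 'x set" where "Aset n c = {q. snd (\<pi> q) n = c}"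

lemma Aset_open: "open (Aset n c)" using A_open[of n "{c}"] unfolding Aset_def by simp
lemma Aset_closed: "closed (Aset n c)" using A_closed[of n "{c}"] unfolding Aset_def by simp
lemma Aset_borel: "Aset n c \<in> sets borel" using Aset_open by (rule borel_open)

lemma ind_cont: "open A \<Longrightarrow> closed A \<Longrightarrow> continuous_on UNIV (indicator A :: 'x \<Rightarrow> real)"
proof -
  assume o: "open A" and c: "closed A"
  have oc: "open (- A)" using c by (simp add: open_Compl)
  have "open (indicator A -` B \<inter> UNIV)" if B: "open B" for B :: "real set"
  proof -
    have "indicator A -` B = (if (1::real) \<in> B then A else {}) \<union> (if (0::real) \<in> B then - A else {})"
    proof (intro equalityI subsetI)
      fix x assume "x \<in> indicator A -` B"
      then show "x \<in> (if (1::real) \<in> B then A else {}) \<union> (if (0::real) \<in> B then - A else {})"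
        by (cases "x \<in> A") auto
    next
      fix x assume "x \<in> (if (1::real) \<in> B then A else {}) \<union> (if (0::real) \<in> B then - A else {})"
      then show "x \<in> indicator A -` B"
        by (cases "x \<in> A") (auto split: if_splits)
    qed
    then show ?thesis using o oc by auto
  qed
  then show ?thesis using continuous_on_open_vimage[OF open_UNIV] by blast
qed

context
  fixes \<nu> :: "(nat \<Rightarrow> letter) \<Rightarrow> 'x measure"
  assumes R: "is_RIM r \<phi> (fst \<circ> \<pi>) \<nu>"
begin

lemma R1: "\<forall>y\<in>Ys. sets (\<nu> y) = sets borel \<and> prob_space (\<nu> y)"
  using R[unfolded is_RIM_def, THEN conjunct1] .
lemma R2: "\<forall>g :: 'x \<Rightarrow> real. continuous_on UNIV g \<longrightarrow> continuous_map (topY r) euclideanreal (\<lambda>y. integral\<^sup>L (\<nu> y) g)"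
  using R[unfolded is_RIM_def, THEN conjunct2, THEN conjunct1] .
lemma R3: "\<forall>w\<in>FG_carrier r. \<forall>y\<in>Ys. \<nu> (actY w y) = distr (\<nu> y) borel (\<phi> w)"
  using R[unfolded is_RIM_def, THEN conjunct2, THEN conjunct2, THEN conjunct1] .
lemma R4: "\<forall>y\<in>Ys. msupp (\<nu> y) \<subseteq> (fst \<circ> \<pi>) -` {y}"
  using R[unfolded is_RIM_def, THEN conjunct2, THEN conjunct2, THEN conjunct2] .
lemma R_prob: "y \<in> Ys \<Longrightarrow> prob_space (\<nu> y)" using R1 by blast
lemma R_sets: "y \<in> Ys \<Longrightarrow> sets (\<nu> y) = sets borel" using R1 by blast
lemma R_space: "y \<in> Ys \<Longrightarrow> space (\<nu> y) = UNIV" using sets_eq_imp_space_eq[OF R_sets] by simp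
lemma R_eqv: "w \<in> carrier G \<Longrightarrow> y \<in> Ys \<Longrightarrow> \<nu> (actY w y) = distr (\<nu> y) borel (\<phi> w)"
  using R3 carrierG by blast
lemma R_cont: "continuous_on UNIV g \<Longrightarrow> continuous_map (topY r) euclideanreal (\<lambda>y. integral\<^sup>L (\<nu> y) g)"
  using R2 by blast
lemma R_supp: "y \<in> Ys \<Longrightarrow> msupp (\<nu> y) \<subseteq> (fst \<circ> \<pi>) -` {y}"
  using R4 by blast

lemma Lam_eqv: "w \<in> carrier G \<Longrightarrow> y \<in> Ys \<Longrightarrow> n \<ge> 1 \<Longrightarrow> c \<subseteq> carrier G \<Longrightarrow>
  measure (\<nu> (actY w y)) (Aset n (w <#\<^bsub>G\<^esub> c)) = measure (\<nu> y) (Aset n c)"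
proof -
  assume w: "w \<in> carrier G" and y: "y \<in> Ys" and n: "n \<ge> 1" and c: "c \<subseteq> carrier G"
  have phim: "\<phi> w \<in> measurable (\<nu> y) borel"
    using borel_measurable_continuous_onI[OF phi_cont[OF w]] measurable_cong_sets[OF R_sets[OF y] refl] by blast
  have pre: "\<phi> w -` Aset n (w <#\<^bsub>G\<^esub> c) \<inter> space (\<nu> y) = Aset n c"
  proof -
    have "\<phi> w q \<in> Aset n (w <#\<^bsub>G\<^esub> c) \<longleftrightarrow> q \<in> Aset n c" for q
    proof -
      let ?z = "snd (\<pi> q)"
      have zc: "?z n \<subseteq> carrier G" using coset_sub[OF n Zs_coset[OF pi_Z n]] .
      have "snd (\<pi> (\<phi> w q)) n = w <#\<^bsub>G\<^esub> ?z n" using pi_eqv[OF w] n by (simp add: actX_def actZ_def)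
      then have "\<phi> w q \<in> Aset n (w <#\<^bsub>G\<^esub> c) \<longleftrightarrow> w <#\<^bsub>G\<^esub> ?z n = w <#\<^bsub>G\<^esub> c" unfolding Aset_def by simp
      also have "\<dots> \<longleftrightarrow> ?z n = c"
      proof
        assume "w <#\<^bsub>G\<^esub> ?z n = w <#\<^bsub>G\<^esub> c"
        then have "inv\<^bsub>G\<^esub> w <#\<^bsub>G\<^esub> (w <#\<^bsub>G\<^esub> ?z n) = inv\<^bsub>G\<^esub> w <#\<^bsub>G\<^esub> (w <#\<^bsub>G\<^esub> c)" by simp
        then show "?z n = c" using lcos_cancel[OF w zc] lcos_cancel[OF w c] by simp
      qed simp
      finally show ?thesis unfolding Aset_def by simp
    qed
    then show ?thesis using R_space[OF y] by auto
  qed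
  have "\<nu> (actY w y) = distr (\<nu> y) borel (\<phi> w)" by (rule R_eqv[OF w y])
  then have "measure (\<nu> (actY w y)) (Aset n (w <#\<^bsub>G\<^esub> c)) = measure (\<nu> y) (\<phi> w -` Aset n (w <#\<^bsub>G\<^esub> c) \<inter> space (\<nu> y))"
    using measure_distr[OF phim Aset_borel] by simp
  then show ?thesis using pre by simp
qed

lemma Lam_cont: "continuous_map (topY r) euclideanreal (\<lambda>y. measure (\<nu> y) (Aset n c))"
proof -
  have c: "continuous_map (topY r) euclideanreal (\<lambda>y. integral\<^sup>L (\<nu> y) (indicator (Aset n c) :: 'x \<Rightarrow> real))"
    by (rule R_cont[OF ind_cont[OF Aset_open Aset_closed]])
  have e: "integral\<^sup>L (\<nu> y) (indicator (Aset n c) :: 'x \<Rightarrow> real) = measure (\<nu> y) (Aset n c)"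
    if "y \<in> topspace (topY r)" for y
  proof -
    have "y \<in> Ys" using that topspace_topY by simp
    then have "space (\<nu> y) = UNIV" by (rule R_space)
    then show ?thesis by (simp add: integral_indicator)
  qed
  show ?thesis using continuous_map_eq[OF c e] .
qed

lemma hcoset: "n \<ge> 1 \<Longrightarrow> h \<in> N n \<Longrightarrow> c \<in> rcosets\<^bsub>G\<^esub> (N n) \<Longrightarrow> h <#\<^bsub>G\<^esub> c = c"
proof -
  assume n: "n \<ge> 1" and h: "h \<in> N n" and c: "c \<in> rcosets\<^bsub>G\<^esub> (N n)"
  obtain g where g: "g \<in> carrier G" "c = N n #>\<^bsub>G\<^esub> g" using c unfolding RCOSETS_def by auto
  have Nc: "N n \<subseteq> carrier G" using subgroup.subset[OF subgroupN[OF n]] .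
  have hc: "h \<in> carrier G" using h Nc by auto
  have "h <#\<^bsub>G\<^esub> c = (h <#\<^bsub>G\<^esub> N n) #>\<^bsub>G\<^esub> g" using Gr.coset_assoc[OF hc g(1) Nc] g(2) by simp
  also have "h <#\<^bsub>G\<^esub> N n = N n" using Gr.coset_join3[OF hc subgroupN[OF n] h] .
  finally show ?thesis using g(2) by simp
qed

lemma Lam_const: "n \<ge> 1 \<Longrightarrow> c \<in> rcosets\<^bsub>G\<^esub> (N n) \<Longrightarrow> y \<in> Ys \<Longrightarrow> y0 \<in> Ys \<Longrightarrow>
  measure (\<nu> y) (Aset n c) = measure (\<nu> y0) (Aset n c)"
proof (rule ccontr)
  assume n: "n \<ge> 1" and c: "c \<in> rcosets\<^bsub>G\<^esub> (N n)" and y: "y \<in> Ys" and y0: "y0 \<in> Ys"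
    and ne: "measure (\<nu> y) (Aset n c) \<noteq> measure (\<nu> y0) (Aset n c)"
  let ?L = "\<lambda>y. measure (\<nu> y) (Aset n c)"
  define e where "e = dist (?L y) (?L y0)"
  have e: "e > 0" using ne unfolding e_def by simp
  have "openin euclideanreal (ball (?L y0) e)" using open_ball open_openin by blast
  then have o: "openin (topY r) {x \<in> topspace (topY r). ?L x \<in> ball (?L y0) e}"
    using openin_continuous_map_preimage[OF Lam_cont] by blast
  have "y0 \<in> {x \<in> topspace (topY r). ?L x \<in> ball (?L y0) e}" using y0 e topspace_topY by simp
  then obtain k where k: "\<forall>y'\<in>Ys. (\<forall>i<k. y' i = y0 i) \<longrightarrow> y' \<in> {x \<in> topspace (topY r). ?L x \<in> ball (?L y0) e}"
    using cylY_nbhd[OF o] by blast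
  obtain h where h: "h \<in> N n" "\<forall>i<k. actY h y i = y0 i" using dens[OF n y0 y] by blast
  have hc: "h \<in> carrier G" using h(1) subgroup.subset[OF subgroupN[OF n]] by auto
  have hy: "actY h y \<in> Ys" using actY_Ys[OF hc y] .
  have "?L (actY h y) \<in> ball (?L y0) e" using k hy h(2) by blast
  moreover have "?L (actY h y) = ?L y"
    using Lam_eqv[OF hc y n coset_sub[OF n c]] hcoset[OF n h(1) c] by simp
  ultimately have "dist (?L y0) (?L y) < e" by simp
  then show False unfolding e_def by (simp add: dist_commute)
qed

lemma Lam_val: "n \<ge> 1 \<Longrightarrow> c \<in> rcosets\<^bsub>G\<^esub> (N n) \<Longrightarrow> y \<in> Ys \<Longrightarrow>
  measure (\<nu> y) (Aset n c) = 1 / real (card (rcosets\<^bsub>G\<^esub> (N n)))"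
proof -
  assume n: "n \<ge> 1" and c: "c \<in> rcosets\<^bsub>G\<^esub> (N n)" and y: "y \<in> Ys"
  interpret P: prob_space "\<nu> y" by (rule R_prob[OF y])
  let ?RC = "rcosets\<^bsub>G\<^esub> (N n)"
  have same: "measure (\<nu> y) (Aset n c') = measure (\<nu> y) (Aset n c)" if c': "c' \<in> ?RC" for c'
  proof -
    obtain g where g: "g \<in> carrier G" "c = N n #>\<^bsub>G\<^esub> g" using c unfolding RCOSETS_def by auto
    obtain g' where g': "g' \<in> carrier G" "c' = N n #>\<^bsub>G\<^esub> g'" using c' unfolding RCOSETS_def by auto
    define w where "w = g' \<otimes>\<^bsub>G\<^esub> inv\<^bsub>G\<^esub> g"
    have wc: "w \<in> carrier G" unfolding w_def using g g' by simp
    have Nc: "N n \<subseteq> carrier G" using subgroup.subset[OF subgroupN[OF n]] .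
    have "w <#\<^bsub>G\<^esub> c = (w <#\<^bsub>G\<^esub> N n) #>\<^bsub>G\<^esub> g" using Gr.coset_assoc[OF wc g(1) Nc] g(2) by simp
    also have "w <#\<^bsub>G\<^esub> N n = N n #>\<^bsub>G\<^esub> w" using normal.coset_eq[OF normalN[OF n]] wc by simp
    also have "(N n #>\<^bsub>G\<^esub> w) #>\<^bsub>G\<^esub> g = N n #>\<^bsub>G\<^esub> (w \<otimes>\<^bsub>G\<^esub> g)" using Gr.coset_mult_assoc[OF Nc wc g(1)] .
    also have "w \<otimes>\<^bsub>G\<^esub> g = g'" unfolding w_def using g g' by (simp add: Gr.m_assoc)
    finally have wcc: "w <#\<^bsub>G\<^esub> c = c'" using g'(2) by simp
    have wy: "actY w y \<in> Ys" using actY_Ys[OF wc y] .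
    have "measure (\<nu> y) (Aset n c') = measure (\<nu> (actY w y)) (Aset n (w <#\<^bsub>G\<^esub> c))"
      using Lam_const[OF n c' y wy] wcc by simp
    also have "\<dots> = measure (\<nu> y) (Aset n c)" by (rule Lam_eqv[OF wc y n coset_sub[OF n c]])
    finally show ?thesis .
  qed
  have un: "(\<Union>c'\<in>?RC. Aset n c') = UNIV" unfolding Aset_def using Zs_coset[OF pi_Z n] by auto
  have "measure (\<nu> y) (\<Union>c'\<in>?RC. Aset n c') = (\<Sum>c'\<in>?RC. measure (\<nu> y) (Aset n c'))"
  proof (rule P.finite_measure_finite_Union[OF finN[OF n]])
    show "(\<lambda>c'. Aset n c') ` ?RC \<subseteq> P.events" using Aset_borel R_sets[OF y] by auto
    show "disjoint_family_on (\<lambda>c'. Aset n c') ?RC" unfolding disjoint_family_on_def Aset_def by auto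
  qed
  then have "1 = (\<Sum>c'\<in>?RC. measure (\<nu> y) (Aset n c))" using un same R_space[OF y] P.prob_space by simp
  also have "\<dots> = real (card ?RC) * measure (\<nu> y) (Aset n c)" by simp
  finally have prod1: "real (card ?RC) * measure (\<nu> y) (Aset n c) = 1" by simp
  then have cne: "real (card ?RC) \<noteq> 0" by (metis mult_zero_left zero_neq_one)
  then show ?thesis using prod1 by (simp add: eq_divide_eq mult.commute)
qed

end

lemma mu_Aset: "y \<in> Ys \<Longrightarrow> n \<ge> 1 \<Longrightarrow> c \<in> rcosets\<^bsub>G\<^esub> (N n) \<Longrightarrow> measure (mu y) (Aset n c) = kap n"
proof -
  assume y: "y \<in> Ys" and n: "n \<ge> 1" and c: "c \<in> rcosets\<^bsub>G\<^esub> (N n)"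
  have "sy y -` Aset n c \<inter> space H = Cyl n c" unfolding Aset_def Cyl_def using sy_pi[OF y] space_H by auto
  then have "measure (mu y) (Aset n c) = measure H (Cyl n c)"
    unfolding mu_def using measure_distr[OF sy_meas[OF y] Aset_borel] by simp
  then show ?thesis using measure_H_Cyl[OF n c] by simp
qed

lemma kap_eq: "n \<ge> 1 \<Longrightarrow> kap n = 1 / real (card (rcosets\<^bsub>G\<^esub> (N n)))"
proof -
  assume n: "n \<ge> 1"
  have c: "N n \<in> rcosets\<^bsub>G\<^esub> (N n)"
    using Gr.rcosetsI[OF subgroup.subset[OF subgroupN[OF n]] Gr.one_closed]
      Gr.coset_mult_one[OF subgroup.subset[OF subgroupN[OF n]]] by simp
  show ?thesis using mu_Aset[OF Ys_ne n c] Lam_val[OF mu_RIM n c Ys_ne] by simp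
qed



definition Egen :: "'x set set" where
  "Egen = (\<Union>n\<in>{1..}. Aset n ` (rcosets\<^bsub>G\<^esub> (N n))) \<union> {{}, UNIV}"

lemma Egen_borel: "Egen \<subseteq> sets borel" unfolding Egen_def using Aset_borel by auto

lemma Egen_cases: "X \<in> Egen \<Longrightarrow> X = {} \<or> X = UNIV \<or> (\<exists>n c. n \<ge> 1 \<and> c \<in> rcosets\<^bsub>G\<^esub> (N n) \<and> X = Aset n c)"
  unfolding Egen_def by auto

lemma Aset_Egen: "n \<ge> 1 \<Longrightarrow> c \<in> rcosets\<^bsub>G\<^esub> (N n) \<Longrightarrow> Aset n c \<in> Egen" unfolding Egen_def by auto

lemma Aset_Int: "1 \<le> m \<Longrightarrow> m \<le> n \<Longrightarrow> Aset n c \<inter> Aset m c' = Aset n c \<or> Aset n c \<inter> Aset m c' = {}"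
proof -
  assume m: "1 \<le> m" "m \<le> n"
  show ?thesis
  proof (cases "Aset n c \<inter> Aset m c' = {}")
    case True then show ?thesis by simp
  next
    case False
    then obtain q0 where q0: "snd (\<pi> q0) n = c" "snd (\<pi> q0) m = c'" unfolding Aset_def by auto
    have "Aset n c \<subseteq> Aset m c'"
    proof
      fix q assume "q \<in> Aset n c"
      then have q: "snd (\<pi> q) n = c" unfolding Aset_def by simp
      have "snd (\<pi> q) m = snd (\<pi> q0) m" using Zs_agree[OF pi_Z pi_Z m, of q0 q] q q0(1) by simp
      then show "q \<in> Aset m c'" using q0(2) unfolding Aset_def by simp
    qed
    then show ?thesis by blast
  qed
qed

lemma Egen_Int_stable: "Int_stable Egen"
proof (rule Int_stableI)
  fix a b assume a: "a \<in> Egen" and b: "b \<in> Egen"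
  have e: "{} \<in> Egen" unfolding Egen_def by simp
  show "a \<inter> b \<in> Egen"
  proof (cases "a = {} \<or> b = {}")
    case True then show ?thesis using e by auto
  next
    case F1: False
    show ?thesis
    proof (cases "a = UNIV")
      case True then show ?thesis using b by simp
    next
      case F2: False
      show ?thesis
      proof (cases "b = UNIV")
        case True then show ?thesis using a by simp
      next
        case F3: False
        obtain n c where nc: "n \<ge> 1" "c \<in> rcosets\<^bsub>G\<^esub> (N n)" "a = Aset n c" using Egen_cases[OF a] F1 F2 by blast
        obtain m c' where mc: "m \<ge> 1" "c' \<in> rcosets\<^bsub>G\<^esub> (N m)" "b = Aset m c'" using Egen_cases[OF b] F1 F3 by blast
        show ?thesis
        proof (cases "m \<le> n")
          case True
          then show ?thesis using Aset_Int[OF mc(1) True, of c c'] nc mc e a by auto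
        next
          case False
          then have nm: "n \<le> m" by simp
          show ?thesis using Aset_Int[OF nc(1) nm, of c' c] nc mc e b by (auto simp: Int_commute)
        qed
      qed
    qed
  qed
qed

lemma Egen_countable: "countable Egen"
proof -
  have c1: "countable {1::nat..}" by (rule countableI_type)
  have c2: "countable (Aset n ` (rcosets\<^bsub>G\<^esub> (N n)))" if "n \<in> {1..}" for n
    using finN[of n] that by (intro countable_finite finite_imageI) auto
  have "countable (\<Union>n\<in>{1..}. Aset n ` (rcosets\<^bsub>G\<^esub> (N n)))"
    by (rule countable_UN[OF c1 c2])
  then show ?thesis unfolding Egen_def by simp
qed

lemma sig_borel: "sigma_sets UNIV Egen \<subseteq> sets borel"
  using sets.sigma_sets_subset[OF Egen_borel] by simp

context
  fixes \<nu> :: "(nat \<Rightarrow> letter) \<Rightarrow> 'x measure"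
  assumes R: "is_RIM r \<phi> (fst \<circ> \<pi>) \<nu>"
begin

lemma R_Aset: "y \<in> Ys \<Longrightarrow> n \<ge> 1 \<Longrightarrow> c \<in> rcosets\<^bsub>G\<^esub> (N n) \<Longrightarrow> measure (\<nu> y) (Aset n c) = kap n"
  using Lam_val[OF R] kap_eq by simp

lemma R_fiber_null: "y \<in> Ys \<Longrightarrow> z \<in> Zs \<Longrightarrow> {q. snd (\<pi> q) = z} \<in> null_sets (\<nu> y)"
proof -
  assume y: "y \<in> Ys" and z: "z \<in> Zs"
  interpret P: prob_space "\<nu> y" by (rule R_prob[OF R y])
  have eq: "{q. snd (\<pi> q) = z} = (\<Inter>n\<in>{1..}. Aset n (z n))"
  proof (intro equalityI subsetI)
    fix q assume "q \<in> {q. snd (\<pi> q) = z}" then show "q \<in> (\<Inter>n\<in>{1..}. Aset n (z n))" unfolding Aset_def by simp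
  next
    fix q assume "q \<in> (\<Inter>n\<in>{1..}. Aset n (z n))"
    then have "\<And>n. n \<ge> 1 \<Longrightarrow> z n = snd (\<pi> q) n" unfolding Aset_def by auto
    then have "z = snd (\<pi> q)" using Zs_eqI[OF pi_Z z] by blast
    then show "q \<in> {q. snd (\<pi> q) = z}" by simp
  qed
  have sub: "(\<lambda>n. Aset n (z n)) ` {1..} \<subseteq> sets (\<nu> y)" using Aset_borel R_sets[OF R y] by auto
  have ne: "{1::nat..} \<noteq> {}" by auto
  have ms: "(\<Inter>n\<in>{1..}. Aset n (z n)) \<in> sets (\<nu> y)"
    using sets.countable_INT'[OF countableI_type ne sub] .
  have le: "measure (\<nu> y) {q. snd (\<pi> q) = z} \<le> kap n" if n: "n \<ge> 1" for n
  proof -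
    have "{q. snd (\<pi> q) = z} \<subseteq> Aset n (z n)" unfolding Aset_def by auto
    moreover have "Aset n (z n) \<in> sets (\<nu> y)" using Aset_borel R_sets[OF R y] by simp
    ultimately have "measure (\<nu> y) {q. snd (\<pi> q) = z} \<le> measure (\<nu> y) (Aset n (z n))" by (rule P.finite_measure_mono)
    also have "\<dots> = kap n" using R_Aset[OF y n Zs_coset[OF z n]] .
    finally show ?thesis .
  qed
  have m0: "measure (\<nu> y) {q. snd (\<pi> q) = z} = 0"
  proof (rule ccontr)
    assume "measure (\<nu> y) {q. snd (\<pi> q) = z} \<noteq> 0"
    then have "measure (\<nu> y) {q. snd (\<pi> q) = z} > 0" using measure_nonneg[of "\<nu> y" "{q. snd (\<pi> q) = z}"] by (simp add: less_le)
    then obtain n where "n \<ge> 1" "kap n < measure (\<nu> y) {q. snd (\<pi> q) = z}" using kap_small by blast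
    then show False using le by fastforce
  qed
  have "emeasure (\<nu> y) {q. snd (\<pi> q) = z} = 0" using P.emeasure_eq_measure m0 by simp
  then show ?thesis using ms eq by (simp add: null_sets_def)
qed

lemma R_bad_null: "y \<in> Ys \<Longrightarrow> {q. snd (\<pi> q) \<in> Bad y} \<in> null_sets (\<nu> y)"
proof -
  assume y: "y \<in> Ys"
  have "{q. snd (\<pi> q) \<in> Bad y} = (\<Union>z\<in>Bad y. {q. snd (\<pi> q) = z})" by auto
  moreover have "(\<Union>z\<in>Bad y. {q. snd (\<pi> q) = z}) \<in> null_sets (\<nu> y)"
  proof (rule null_sets_UN'[OF Bad_countable])
    fix z assume "z \<in> Bad y"
    then have "z \<in> Zs" unfolding Bad_def by simp
    then show "{q. snd (\<pi> q) = z} \<in> null_sets (\<nu> y)" by (rule R_fiber_null[OF y])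
  qed
  ultimately show ?thesis by simp
qed

lemma R_out_null: "y \<in> Ys \<Longrightarrow> {q. fst (\<pi> q) \<noteq> y} \<in> null_sets (\<nu> y)"
proof -
  assume y: "y \<in> Ys"
  define V where "V k = {q. \<exists>i<k. fst (\<pi> q) i \<noteq> y i}" for k
  have Vc: "closed (V k)" for k
  proof -
    have o: "openin euclidean {x \<in> topspace euclidean. fst (\<pi> x) \<in> {y' \<in> Ys. \<forall>i<k. y' i = y i}}"
      using openin_continuous_map_preimage[OF fstpi_cont cylY_open[OF y, of k]] .
    have eqV: "{x \<in> topspace euclidean. fst (\<pi> x) \<in> {y' \<in> Ys. \<forall>i<k. y' i = y i}} = - V k"
      unfolding V_def using pi_Y by auto
    have "openin euclidean (- V k)" using o by (simp only: eqV)
    then have "open (- V k)" using open_openin by blast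
    then show ?thesis using closed_open by blast
  qed
  have Vn: "V k \<in> null_sets (\<nu> y)" for k
  proof -
    have cpt: "compact (V k)" using compact_Int_closed[OF compactU Vc[of k]] by simp
    let ?T = "{U. open U \<and> emeasure (\<nu> y) U = 0}"
    have cov: "V k \<subseteq> \<Union>?T"
    proof
      fix q assume q: "q \<in> V k"
      then have "fst (\<pi> q) \<noteq> y" unfolding V_def by auto
      then have "q \<notin> msupp (\<nu> y)" using R_supp[OF R y] by auto
      then obtain U where U: "open U" "q \<in> U" "\<not> emeasure (\<nu> y) U > 0" unfolding msupp_def by blast
      then have "emeasure (\<nu> y) U = 0" by (simp add: not_gr_zero)
      then show "q \<in> \<Union>?T" using U by blast
    qed
    have "\<exists>T'. T' \<subseteq> ?T \<and> finite T' \<and> V k \<subseteq> \<Union>T'" by (rule compactE[OF cpt cov]) auto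
    then obtain T' where T': "T' \<subseteq> ?T" "finite T'" "V k \<subseteq> \<Union>T'" by blast
    have "(\<Union>U\<in>T'. U) \<in> null_sets (\<nu> y)"
    proof (rule null_sets_UN')
      show "countable T'" using T'(2) by (rule countable_finite)
      fix U assume "U \<in> T'"
      then have U: "open U" "emeasure (\<nu> y) U = 0" using T'(1) by auto
      have "U \<in> sets (\<nu> y)" using borel_open[OF U(1)] R_sets[OF R y] by simp
      then show "U \<in> null_sets (\<nu> y)" using U(2) by (simp add: null_sets_def)
    qed
    then have nT: "\<Union>T' \<in> null_sets (\<nu> y)" by simp
    have "V k \<in> sets (\<nu> y)" using borel_closed[OF Vc] R_sets[OF R y] by simp
    then show ?thesis using null_sets_subset[OF nT _ T'(3)] by blast
  qed
  have "{q. fst (\<pi> q) \<noteq> y} = (\<Union>k. V k)"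
  proof (intro equalityI subsetI)
    fix q assume "q \<in> {q. fst (\<pi> q) \<noteq> y}"
    then obtain i where "fst (\<pi> q) i \<noteq> y i" by auto
    then have "q \<in> V (Suc i)" unfolding V_def by auto
    then show "q \<in> (\<Union>k. V k)" by blast
  next
    fix q assume "q \<in> (\<Union>k. V k)" then show "q \<in> {q. fst (\<pi> q) \<noteq> y}" unfolding V_def by auto
  qed
  then show ?thesis using null_sets_UN[of V "\<nu> y"] Vn by simp
qed

lemma R_agree_gen: "y \<in> Ys \<Longrightarrow> X \<in> Egen \<Longrightarrow> emeasure (\<nu> y) X = emeasure (mu y) X"
proof -
  assume y: "y \<in> Ys" and X: "X \<in> Egen"
  interpret P: prob_space "\<nu> y" by (rule R_prob[OF R y])
  interpret Q: prob_space "mu y" by (rule prob_mu[OF y])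
  have spP: "space (\<nu> y) = UNIV" by (rule R_space[OF R y])
  have spQ: "space (mu y) = UNIV" unfolding mu_def by simp
  show ?thesis
  proof (cases "X = {} \<or> X = UNIV")
    case True
    then show ?thesis
    proof
      assume "X = {}" then show ?thesis by simp
    next
      assume "X = UNIV" then show ?thesis using P.emeasure_space_1 Q.emeasure_space_1 spP spQ by simp
    qed
  next
    case False
    then obtain n c where nc: "n \<ge> 1" "c \<in> rcosets\<^bsub>G\<^esub> (N n)" "X = Aset n c" using Egen_cases[OF X] by blast
    have "measure (\<nu> y) X = measure (mu y) X" using R_Aset[OF y nc(1,2)] mu_Aset[OF y nc(1,2)] nc(3) by simp
    then show ?thesis using P.emeasure_eq_measure Q.emeasure_eq_measure by simp
  qed
qed

lemma R_sigma_agree: "y \<in> Ys \<Longrightarrow> X \<in> sigma_sets UNIV Egen \<Longrightarrow> emeasure (\<nu> y) X = emeasure (mu y) X"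
proof -
  assume y: "y \<in> Ys" and X: "X \<in> sigma_sets UNIV Egen"
  interpret P: prob_space "\<nu> y" by (rule R_prob[OF R y])
  interpret Q: prob_space "mu y" by (rule prob_mu[OF y])
  have spP: "space (\<nu> y) = UNIV" by (rule R_space[OF R y])
  have spQ: "space (mu y) = UNIV" unfolding mu_def by simp
  have sP: "sets (\<nu> y) = sets borel" by (rule R_sets[OF R y])
  have sQ: "sets (mu y) = sets borel" by (rule sets_mu)
  show ?thesis
  proof (rule sigma_sets_induct_disjoint[OF Egen_Int_stable _ X])
    show "Egen \<subseteq> Pow UNIV" by simp
  next
    fix A assume "A \<in> Egen" then show "emeasure (\<nu> y) A = emeasure (mu y) A" by (rule R_agree_gen[OF y])
  next
    show "emeasure (\<nu> y) {} = emeasure (mu y) {}" by simp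
  next
    fix A assume A: "A \<in> sigma_sets UNIV Egen" and e: "emeasure (\<nu> y) A = emeasure (mu y) A"
    have Ab: "A \<in> sets borel" using A sig_borel by blast
    have "emeasure (\<nu> y) (UNIV - A) = emeasure (\<nu> y) UNIV - emeasure (\<nu> y) A"
      using emeasure_compl[of A "\<nu> y"] P.emeasure_finite[of A] Ab sP spP by simp
    moreover have "emeasure (mu y) (UNIV - A) = emeasure (mu y) UNIV - emeasure (mu y) A"
      using emeasure_compl[of A "mu y"] Q.emeasure_finite[of A] Ab sQ spQ by simp
    moreover have "emeasure (\<nu> y) UNIV = emeasure (mu y) UNIV"
      using P.emeasure_space_1 Q.emeasure_space_1 spP spQ by simp
    ultimately show "emeasure (\<nu> y) (UNIV - A) = emeasure (mu y) (UNIV - A)" using e by simp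
  next
    fix A :: "nat \<Rightarrow> 'x set" assume d: "disjoint_family A" and rA: "range A \<subseteq> sigma_sets UNIV Egen"
      and e: "\<And>i. emeasure (\<nu> y) (A i) = emeasure (mu y) (A i)"
    have rb: "range A \<subseteq> sets borel" using rA sig_borel by blast
    have "emeasure (\<nu> y) (\<Union>(range A)) = (\<Sum>i. emeasure (\<nu> y) (A i))"
      using suminf_emeasure[of A "\<nu> y"] rb sP d by simp
    also have "\<dots> = (\<Sum>i. emeasure (mu y) (A i))" using e by simp
    also have "\<dots> = emeasure (mu y) (\<Union>(range A))"
      using suminf_emeasure[of A "mu y"] rb sQ d by simp
    finally show "emeasure (\<nu> y) (\<Union>(range A)) = emeasure (mu y) (\<Union>(range A))" .
  qed
qed

end



lemma open_agree:
  assumes R: "is_RIM r \<phi> (fst \<circ> \<pi>) \<nu>" and y: "y \<in> Ys" and U: "open U"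
  shows "emeasure (\<nu> y) U = emeasure (mu y) U"
proof -
  let ?Nl = "{q. fst (\<pi> q) \<noteq> y} \<union> {q. snd (\<pi> q) \<in> Bad y}"
  have Nl1: "?Nl \<in> null_sets (\<nu> y)" using R_out_null[OF R y] R_bad_null[OF R y] by (rule null_sets.Un)
  have Nl2: "?Nl \<in> null_sets (mu y)" using R_out_null[OF mu_RIM y] R_bad_null[OF mu_RIM y] by (rule null_sets.Un)
  let ?C = "{X \<in> Egen. X - ?Nl \<subseteq> U}"
  let ?E = "\<Union>?C"
  have Esig: "?E \<in> sigma_sets UNIV Egen"
  proof -
    have s: "sets (sigma UNIV Egen) = sigma_sets UNIV Egen" by (rule sets_measure_of) simp
    have "?E \<in> sets (sigma UNIV Egen)"
    proof (rule sets.countable_Union)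
      show "countable ?C" by (rule countable_subset[OF _ Egen_countable]) auto
      show "?C \<subseteq> sets (sigma UNIV Egen)" using s by auto
    qed
    then show ?thesis using s by simp
  qed
  have Eb: "?E \<in> sets borel" using Esig sig_borel by blast
  have Ub: "U \<in> sets borel" using U by (rule borel_open)
  have key: "q \<in> U \<longleftrightarrow> q \<in> ?E" if q: "q \<notin> ?Nl" for q
  proof
    assume qU: "q \<in> U"
    let ?z = "snd (\<pi> q)"
    have fq: "fst (\<pi> q) = y" and zB: "?z \<notin> Bad y" using q by auto
    have zZ: "?z \<in> Zs" by (rule pi_Z)
    have pq: "\<pi> q = (y, ?z)" using fq by (metis prod.collapse)
    have pX: "(y, ?z) \<in> Xset r N" using y zZ unfolding Xset_def by simp
    have pO: "(y, ?z) \<notin> Orb" using zB zZ unfolding Bad_def by simp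
    have qs: "q = sec (y, ?z)" using fib_unique[OF pX pO pq] .
    have sU: "sec (y, ?z) \<in> U" using qU qs by simp
    obtain W where W: "openin (topX r N) W" "(y, ?z) \<in> W" "\<forall>q. \<pi> q \<in> W \<longrightarrow> q \<in> U"
      using closed_map_nbhd[OF pX pO U sU] by blast
    obtain k n where kn: "n \<ge> 1" "\<forall>y'\<in>Ys. \<forall>z'\<in>Zs. (\<forall>i<k. y' i = y i) \<longrightarrow> z' n = ?z n \<longrightarrow> (y', z') \<in> W"
      using X_nbhd[OF W(1,2)] by blast
    have XE: "Aset n (?z n) \<in> Egen" using Aset_Egen[OF kn(1) Zs_coset[OF zZ kn(1)]] .
    have "Aset n (?z n) - ?Nl \<subseteq> U"
    proof
      fix q' assume q': "q' \<in> Aset n (?z n) - ?Nl"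
      then have f': "fst (\<pi> q') = y" and s': "snd (\<pi> q') n = ?z n" unfolding Aset_def by auto
      have "(y, snd (\<pi> q')) \<in> W" using kn(2) y pi_Z s' by blast
      moreover have "\<pi> q' = (y, snd (\<pi> q'))" using f' by (metis prod.collapse)
      ultimately show "q' \<in> U" using W(3) by metis
    qed
    moreover have "q \<in> Aset n (?z n)" unfolding Aset_def by simp
    ultimately show "q \<in> ?E" using XE by blast
  next
    assume "q \<in> ?E"
    then obtain X where "X \<in> ?C" "q \<in> X" by blast
    then show "q \<in> U" using q by blast
  qed
  have ae1: "AE q in \<nu> y. (q \<in> U) = (q \<in> ?E)"
    by (rule AE_I'[OF Nl1]) (use key in blast)
  have ae2: "AE q in mu y. (q \<in> ?E) = (q \<in> U)"
    by (rule AE_I'[OF Nl2]) (use key in blast)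
  have sP: "sets (\<nu> y) = sets borel" by (rule R_sets[OF R y])
  have "emeasure (\<nu> y) U = emeasure (\<nu> y) ?E" using emeasure_eq_AE[OF ae1] Ub Eb sP by simp
  also have "\<dots> = emeasure (mu y) ?E" by (rule R_sigma_agree[OF R y Esig])
  also have "\<dots> = emeasure (mu y) U" using emeasure_eq_AE[OF ae2] Ub Eb sets_mu by simp
  finally show ?thesis .
qed

lemma unique:
  assumes R: "is_RIM r \<phi> (fst \<circ> \<pi>) \<nu>" and y: "y \<in> Ys"
  shows "\<nu> y = mu y"
proof (rule measure_eqI_generator_eq[where E = "{U. open U}" and \<Omega> = UNIV and A = "\<lambda>_. UNIV"])
  show "Int_stable {U :: 'x set. open U}" by (auto simp: Int_stable_def)
  show "{U :: 'x set. open U} \<subseteq> Pow UNIV" by simp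
  show "\<And>X. X \<in> {U. open U} \<Longrightarrow> emeasure (\<nu> y) X = emeasure (mu y) X" using open_agree[OF R y] by simp
  show "sets (\<nu> y) = sigma_sets UNIV {U. open U}" using R_sets[OF R y] sets_borel by simp
  show "sets (mu y) = sigma_sets UNIV {U. open U}" using sets_mu sets_borel by simp
  show "range (\<lambda>_. UNIV) \<subseteq> {U :: 'x set. open U}" by simp
  show "(\<Union>i::nat. UNIV) = (UNIV :: 'x set)" by simp
  interpret P: prob_space "\<nu> y" by (rule R_prob[OF R y])
  show "\<And>i::nat. emeasure (\<nu> y) UNIV \<noteq> \<infinity>" using P.emeasure_finite by simp
qed

theorem main: "\<exists>\<mu>. is_RIM r \<phi> (fst \<circ> \<pi>) \<mu> \<and> (\<forall>\<mu>'. is_RIM r \<phi> (fst \<circ> \<pi>) \<mu>' \<longrightarrow> (\<forall>y\<in>Ys. \<mu>' y = \<mu> y))"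
  using mu_RIM unique by blast

end

theorem lemma5p2:
  fixes r :: nat and N :: "nat \<Rightarrow> word set" and \<gamma> :: "nat \<Rightarrow> word"
    and \<phi> :: "word \<Rightarrow> 'x::topological_space \<Rightarrow> 'x" and \<pi> :: "'x \<Rightarrow> ptX"
  assumes "r \<ge> 2"
    and "admissible_seq r N"
    and "admissible_gamma r N \<gamma>"
    and "mcmahon_ext r N \<gamma> \<phi> \<pi>"
  shows "\<exists>\<mu>. is_RIM r \<phi> (fst \<circ> \<pi>) \<mu> \<and>
           (\<forall>\<mu>'. is_RIM r \<phi> (fst \<circ> \<pi>) \<mu>' \<longrightarrow> (\<forall>y\<in>Yset r. \<mu>' y = \<mu> y))"
proof -
  interpret S: setting r N \<gamma> \<phi> \<pi> by (rule setting.intro[OF assms])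
  show ?thesis by (rule S.main)
qed

end
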